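(* Assume Assumption (I), and let $(L_k,u_k)$ be a sequence generated by Algorithm A. Let $\bar u\in V$ be the weak limit in $V$ of a subsequence of $(u_k)$. Then there exists $\bar\lambda\in V^*$ such that \[ \alpha\langle\bar u,v\rangle_V+\beta\langle\bar\lambda,v\rangle_{V^*,V}=-F'(\bar u)v\quad\forall v\in V, \qquad \langle\bar\lambda,\bar u\rangle_{V^*,V}\ge p\int_\Omega|\bar u|^p\,dx . \]
   Context: Standing assumptions: $\Omega\subset\mathbb R^d$ bounded Lipschitz domain; $V$ real Hilbert space with inner product $\langle\cdot,\cdot\rangle_V$, $V\subset L^2(\Omega)$ with compact and dense embedding; $V^*$ dual with pairing $\langle\cdot,\cdot\rangle_{V^*,V}$. $F:V\to\mathbb R$ weakly lower semicontinuous, bounded below by an affine function, continuously Fréchet differentiable. $\alpha>0$, $\beta>0$, $p\in(0,1)$. Assumption (I): the standing assumptions hold; $F'$ is completely continuous ($u_n\rightharpoonup u$ in $V$ implies $F'(u_n)\to F'(u)$ in $V^*$); and $F':V\to V^*$ is Lipschitz continuous on bounded sets. For $\epsilon>0$, $\psi_\epsilon(t)=\frac p2\frac{t}{\epsilon^{2-p}}+(1-\frac p2)\epsilon^p$ if $t\in[0,\epsilon^2)$, $\psi_\epsilon(t)=t^{p/2}$ if $t\ge\epsilon^2$, $\psi_\epsilon'(t)=\frac p2\min(\epsilon^{p-2},t^{(p-2)/2})$. Algorithm A: choose a monotonically decreasing sequence $\epsilon_k\searrow0$, constants $\gamma>1$, $\tilde L>0$, and $u_0\in V$. Given $u_k$,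 for $L\ge0$ let problem (Q$_{k,L}$) be $\min_{u\in V} F(u_k)+F'(u_k)(u-u_k)+\frac L2\|u-u_k\|_V^2+\frac\alpha2\|u\|_V^2+\beta\int_\Omega\big[\psi_{\epsilon_k}(u_k^2)+\psi_{\epsilon_k}'(u_k^2)(u^2-u_k^2)\big]dx$ (strongly convex, unique minimizer), and let (D$_{k,L}$) be the condition $F(u_{k+1})\le F(u_k)+F'(u_k)(u_{k+1}-u_k)+L\|u_{k+1}-u_k\|_V^2$ for its minimizer $u_{k+1}$. $L_k$ is the smallest $L\in\{0\}\cup\{\tilde L\gamma^l:l\ge0\}$ for which (D$_{k,L}$) holds, and $u_{k+1}$ is the corresponding minimizer; then $k\mapsto k+1$. *)

theory Defs
  imports "HOL-Analysis.Analysis"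
begin

text \<open>Coordinate-free: near every boundary point x there
  are a radius r > 0, a unit direction e and a Lipschitz function g on the hyperplane
  orthogonal to e such that, inside the ball, the set lies strictly below the graph of g.\<close>

definition lipschitz_domain :: "'d::euclidean_space set \<Rightarrow> bool" where
  "lipschitz_domain \<Omega> \<longleftrightarrow> open \<Omega> \<and> connected \<Omega> \<and> \<Omega> \<noteq> {} \<and>
     (\<forall>x\<in>frontier \<Omega>. \<exists>r>0. \<exists>e. norm e = 1 \<and> (\<exists>g M. lipschitz_on M {z. z \<bullet> e = 0} g \<and>
        (\<forall>y\<in>ball x r. y \<in> \<Omega> \<longleftrightarrow> y \<bullet> e < g (y - (y \<bullet> e) *\<^sub>R e))))"

text \<open>V is a real Hilbert space (type class real_inner + complete_space); the inclusion
  V into L^2(Omega) is the map iota, sending an element of V to a representative function.\<close>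

definition sq_integrable_on :: "'d::euclidean_space set \<Rightarrow> ('d \<Rightarrow> real) \<Rightarrow> bool" where
  "sq_integrable_on \<Omega> f \<longleftrightarrow> f \<in> borel_measurable (lebesgue_on \<Omega>) \<and>
     integrable (lebesgue_on \<Omega>) (\<lambda>x. (f x)\<^sup>2)"

definition L2dist2 :: "'d::euclidean_space set \<Rightarrow> ('d \<Rightarrow> real) \<Rightarrow> ('d \<Rightarrow> real) \<Rightarrow> real" where
  "L2dist2 \<Omega> f g = (LINT x|lebesgue_on \<Omega>. (f x - g x)\<^sup>2)"

definition compact_dense_embedding ::
    "'d::euclidean_space set \<Rightarrow> ('v::{real_inner,complete_space} \<Rightarrow> 'd \<Rightarrow> real) \<Rightarrow> bool" where
  "compact_dense_embedding \<Omega> \<iota> \<longleftrightarrow>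
     \<comment> \<open>linear map into L^2\<close>
     (\<forall>a b u w x. \<iota> (a *\<^sub>R u + b *\<^sub>R w) x = a * \<iota> u x + b * \<iota> w x) \<and>
     (\<forall>u. sq_integrable_on \<Omega> (\<iota> u)) \<and>
     \<comment> \<open>injective (V is a subspace of L^2)\<close>
     (\<forall>u. (AE x in lebesgue_on \<Omega>. \<iota> u x = 0) \<longrightarrow> u = 0) \<and>
     \<comment> \<open>continuous\<close>
     (\<exists>C. \<forall>u. L2dist2 \<Omega> (\<iota> u) (\<lambda>_. 0) \<le> C * (norm u)\<^sup>2) \<and>
     \<comment> \<open>compact: bounded sequences have L^2-convergent subsequences of images\<close>
     (\<forall>u::nat \<Rightarrow> 'v. bounded (range u) \<longrightarrow>
        (\<exists>r f. strict_mono r \<and> sq_integrable_on \<Omega> f \<and>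
           (\<lambda>n. L2dist2 \<Omega> (\<iota> (u (r n))) f) \<longlonglongrightarrow> 0)) \<and>
     \<comment> \<open>dense\<close>
     (\<forall>f. sq_integrable_on \<Omega> f \<longrightarrow> (\<forall>e>0. \<exists>v. L2dist2 \<Omega> (\<iota> v) f < e))"

definition weak_conv :: "(nat \<Rightarrow> 'v::real_inner) \<Rightarrow> 'v \<Rightarrow> bool" where
  "weak_conv u w \<longleftrightarrow> (\<forall>z. (\<lambda>n. inner (u n) z) \<longlonglongrightarrow> inner w z)"

definition weakly_lsc :: "('v::real_inner \<Rightarrow> real) \<Rightarrow> bool" where
  "weakly_lsc F \<longleftrightarrow> (\<forall>u w. weak_conv u w \<longrightarrow> ereal (F w) \<le> liminf (\<lambda>n. ereal (F (u n))))"

definition bounded_below_affine :: "('v::real_normed_vector \<Rightarrow> real) \<Rightarrow> bool" where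
  "bounded_below_affine F \<longleftrightarrow> (\<exists>l c. bounded_linear l \<and> (\<forall>u. l u + c \<le> F u))"

definition standing_F :: "('v::{real_inner,complete_space} \<Rightarrow> real) \<Rightarrow> ('v \<Rightarrow> ('v \<Rightarrow>\<^sub>L real)) \<Rightarrow> bool" where
  "standing_F F F' \<longleftrightarrow> weakly_lsc F \<and> bounded_below_affine F \<and>
     (\<forall>u. (F has_derivative blinfun_apply (F' u)) (at u)) \<and> continuous_on UNIV F'"

definition assumption_I_F :: "('v::{real_inner,complete_space} \<Rightarrow> real) \<Rightarrow> ('v \<Rightarrow> ('v \<Rightarrow>\<^sub>L real)) \<Rightarrow> bool" where
  "assumption_I_F F F' \<longleftrightarrow> standing_F F F' \<and>
     (\<forall>u w. weak_conv u w \<longrightarrow> (\<lambda>n. F' (u n)) \<longlonglongrightarrow> F' w) \<and>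
     (\<forall>B. bounded B \<longrightarrow> (\<exists>M. lipschitz_on M B F'))"

definition psi :: "real \<Rightarrow> real \<Rightarrow> real \<Rightarrow> real" where
  "psi p \<epsilon> t = (if t < \<epsilon>\<^sup>2 then p / 2 * t / \<epsilon> powr (2 - p) + (1 - p / 2) * \<epsilon> powr p
                  else t powr (p / 2))"

text \<open>psi' (t) = p/2 min(eps^(p-2), t^((p-2)/2)), written piecewise (for t >= 0 this is the
  same; it also gives the correct value eps^(p-2) at t = 0, where Isabelle's powr would
  give 0 powr ((p-2)/2) = 0).\<close>
definition dpsi :: "real \<Rightarrow> real \<Rightarrow> real \<Rightarrow> real" where
  "dpsi p \<epsilon> t = p / 2 * (if t < \<epsilon>\<^sup>2 then \<epsilon> powr (p - 2) else t powr ((p - 2) / 2))"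

definition Qobj ::
  "'d::euclidean_space set \<Rightarrow> ('v::{real_inner,complete_space} \<Rightarrow> 'd \<Rightarrow> real) \<Rightarrow>
   ('v \<Rightarrow> real) \<Rightarrow> ('v \<Rightarrow> ('v \<Rightarrow>\<^sub>L real)) \<Rightarrow> real \<Rightarrow> real \<Rightarrow> real \<Rightarrow>
   real \<Rightarrow> 'v \<Rightarrow> real \<Rightarrow> 'v \<Rightarrow> real" where
  "Qobj \<Omega> \<iota> F F' \<alpha> \<beta> p \<epsilon> uk L u =
     F uk + F' uk (u - uk) + L / 2 * (norm (u - uk))\<^sup>2 + \<alpha> / 2 * (norm u)\<^sup>2 +
     \<beta> * (LINT x|lebesgue_on \<Omega>. psi p \<epsilon> ((\<iota> uk x)\<^sup>2) +
                                  dpsi p \<epsilon> ((\<iota> uk x)\<^sup>2) * ((\<iota> u x)\<^sup>2 - (\<iota> uk x)\<^sup>2))"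

definition Dcond :: "('v::real_normed_vector \<Rightarrow> real) \<Rightarrow> ('v \<Rightarrow> ('v \<Rightarrow>\<^sub>L real)) \<Rightarrow>
    'v \<Rightarrow> real \<Rightarrow> 'v \<Rightarrow> bool" where
  "Dcond F F' uk L w \<longleftrightarrow> F w \<le> F uk + F' uk (w - uk) + L * (norm (w - uk))\<^sup>2"

definition Lset :: "real \<Rightarrow> real \<Rightarrow> real set" where
  "Lset Lt \<gamma> = {0} \<union> {Lt * \<gamma> ^ l | l. True}"

definition is_minimizer :: "('v \<Rightarrow> real) \<Rightarrow> 'v \<Rightarrow> bool" where
  "is_minimizer f w \<longleftrightarrow> (\<forall>u. f w \<le> f u)"

definition algorithmA ::
  "'d::euclidean_space set \<Rightarrow> ('v::{real_inner,complete_space} \<Rightarrow> 'd \<Rightarrow> real) \<Rightarrow>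
   ('v \<Rightarrow> real) \<Rightarrow> ('v \<Rightarrow> ('v \<Rightarrow>\<^sub>L real)) \<Rightarrow> real \<Rightarrow> real \<Rightarrow> real \<Rightarrow>
   (nat \<Rightarrow> real) \<Rightarrow> real \<Rightarrow> real \<Rightarrow> 'v \<Rightarrow> (nat \<Rightarrow> real) \<Rightarrow> (nat \<Rightarrow> 'v) \<Rightarrow> bool" where
  "algorithmA \<Omega> \<iota> F F' \<alpha> \<beta> p \<epsilon> \<gamma> Lt u0 L u \<longleftrightarrow>
     u 0 = u0 \<and>
     (\<forall>k. L k \<in> Lset Lt \<gamma> \<and>
          is_minimizer (Qobj \<Omega> \<iota> F F' \<alpha> \<beta> p (\<epsilon> k) (u k) (L k)) (u (Suc k)) \<and>
          Dcond F F' (u k) (L k) (u (Suc k)) \<and>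
          (\<forall>L'\<in>Lset Lt \<gamma>. L' < L k \<longrightarrow>
             (\<forall>w. is_minimizer (Qobj \<Omega> \<iota> F F' \<alpha> \<beta> p (\<epsilon> k) (u k) L') w \<longrightarrow>
                  \<not> Dcond F F' (u k) L' w)))"

end

theory Submission
  imports Defs
begin

lemma lin_quad_zero:
  fixes D R :: real
  assumes "\<forall>t. t * D + t\<^sup>2 * R \<ge> 0"
  shows "D = 0"
proof (rule ccontr)
  assume "D \<noteq> 0"
  define t where "t = - D / (2 * (\<bar>R\<bar> + 1))"
  have pos: "\<bar>R\<bar> + 1 > 0" by simp
  have "t * D + t\<^sup>2 * R \<le> t * D + t\<^sup>2 * \<bar>R\<bar>" by (simp add: mult_left_mono)
  also have "\<dots> = D\<^sup>2 * (\<bar>R\<bar> / (4*(\<bar>R\<bar>+1)^2) - 1/(2*(\<bar>R\<bar>+1)))"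
    unfolding t_def by (simp add: field_simps power2_eq_square)
  also have "\<dots> < 0"
  proof -
    have a: "\<bar>R\<bar>/(2*(\<bar>R\<bar>+1)) < 1" using pos by (simp add: field_simps)
    have "\<bar>R\<bar> / (4*(\<bar>R\<bar>+1)^2) = (\<bar>R\<bar>/(2*(\<bar>R\<bar>+1))) * (1/(2*(\<bar>R\<bar>+1)))"
      by (simp add: power2_eq_square algebra_simps)
    also have "\<dots> < 1 * (1/(2*(\<bar>R\<bar>+1)))"
      using a pos by (intro mult_strict_right_mono) auto
    finally have "\<bar>R\<bar> / (4*(\<bar>R\<bar>+1)^2) < 1/(2*(\<bar>R\<bar>+1))" by simp
    moreover have "D\<^sup>2 > 0" using \<open>D \<noteq> 0\<close> by simp
    ultimately show ?thesis by (simp add: mult_pos_neg)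
  qed
  finally show False using assms by (metis not_le)
qed

lemma quad_first_order:
  fixes G :: "'v::real_vector \<Rightarrow> real"
  assumes expand: "\<And>w v t. G (w + t *\<^sub>R v) = G w + t * D w v + t\<^sup>2 * R v"
    and min: "is_minimizer G w"
  shows "D w v = 0" and "G z = G w + R (z - w)"
proof -
  have D0: "D w v = 0" for v
  proof (rule lin_quad_zero, intro allI)
    fix t
    have "G w \<le> G (w + t *\<^sub>R v)" using min unfolding is_minimizer_def by blast
    thus "t * D w v + t\<^sup>2 * R v \<ge> 0" unfolding expand by linarith
  qed
  thus "D w v = 0" .
  have "G z = G (w + 1 *\<^sub>R (z - w))" by simp
  also have "\<dots> = G w + 1 * D w (z - w) + 1\<^sup>2 * R (z - w)" by (rule expand)
  finally show "G z = G w + R (z - w)" using D0[of "z - w"] by simp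
qed

lemma quad_exists_min:
  fixes G :: "'v::{real_inner,complete_space} \<Rightarrow> real"
  assumes expand: "\<And>w v t. G (w + t *\<^sub>R v) = G w + t * D w v + t\<^sup>2 * R v"
    and Rlo: "\<And>v. c * (norm v)\<^sup>2 \<le> R v" and c: "c > 0"
    and Rhi: "\<And>v. R v \<le> C * (norm v)\<^sup>2"
    and Dbd: "\<And>w. \<exists>K. \<forall>v. \<bar>D w v\<bar> \<le> K * norm v"
  shows "\<exists>w. is_minimizer G w"
proof -
  obtain K0 where K0: "\<And>v. \<bar>D 0 v\<bar> \<le> K0 * norm v" using Dbd by blast
  have lb: "G v \<ge> G 0 - K0\<^sup>2 / (4*c)" for v
  proof -
    have "G v = G (0 + 1 *\<^sub>R v)" by simp
    also have "\<dots> = G 0 + 1 * D 0 v + 1\<^sup>2 * R v" by (rule expand)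
    finally have "G v = G 0 + D 0 v + R v" by simp
    hence "G v \<ge> G 0 - K0 * norm v + c * (norm v)\<^sup>2"
      using K0[of v] Rlo[of v] by linarith
    moreover have "K0 * norm v - c * (norm v)\<^sup>2 \<le> K0\<^sup>2 / (4*c)"
    proof -
      have "0 \<le> (2*c*norm v - K0)\<^sup>2" by simp
      hence "4*c*(K0 * norm v - c * (norm v)\<^sup>2) \<le> K0\<^sup>2"
        by (simp add: power2_eq_square algebra_simps)
      thus ?thesis using c by (simp add: field_simps)
    qed
    ultimately show ?thesis by linarith
  qed
  define m where "m = Inf (range G)"
  have bdd: "bdd_below (range G)" using lb by (intro bdd_belowI2) auto
  have mle: "m \<le> G v" for v unfolding m_def using bdd by (simp add: cInf_lower)
  have ex: "\<forall>n. \<exists>x. G x < m + 1 / (Suc n)"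
  proof
    fix n
    have "m < m + 1/Suc n" by simp
    then obtain y where "y \<in> range G" "y < m + 1/Suc n"
      using cInf_lessD[of "range G" "m + 1/Suc n"] unfolding m_def by blast
    thus "\<exists>x. G x < m + 1 / (Suc n)" by auto
  qed
  obtain x where x: "\<And>n. G (x n) < m + 1 / Suc n" using choice[OF ex] by blast
  have key: "c/2 * (norm (x n - x k))\<^sup>2 \<le> 1/Suc n + 1/Suc k" for n k
  proof -
    define mid where "mid = (1/2) *\<^sub>R (x n + x k)"
    define h where "h = (1/2) *\<^sub>R (x n - x k)"
    have "x n = mid + 1 *\<^sub>R h" unfolding mid_def h_def by (simp add: algebra_simps flip: scaleR_add_left)
    moreover have "G (mid + 1 *\<^sub>R h) = G mid + 1 * D mid h + 1\<^sup>2 * R h" by (rule expand)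
    ultimately have e1: "G (x n) = G mid + D mid h + R h" by simp
    have "x k = mid + (-1) *\<^sub>R h" unfolding mid_def h_def by (simp add: algebra_simps flip: scaleR_add_left)
    moreover have "G (mid + (-1) *\<^sub>R h) = G mid + (-1) * D mid h + (-1)\<^sup>2 * R h" by (rule expand)
    ultimately have e2: "G (x k) = G mid - D mid h + R h" by simp
    have nh: "norm (x n - x k) = 2 * norm h" unfolding h_def by simp
    have "(norm (x n - x k))\<^sup>2 = 4 * (norm h)\<^sup>2" unfolding nh by (simp add: power_mult_distrib)
    hence "R h \<ge> c * (norm (x n - x k))\<^sup>2 / 4" using Rlo[of h] by simp
    with e1 e2 mle[of mid] x[of n] x[of k] show ?thesis by linarith
  qed
  have "Cauchy x"
  proof (rule CauchyI)
    fix e :: real assume e: "e > 0"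
    obtain n0 :: nat where n0: "4 / (c * e\<^sup>2) < n0" using reals_Archimedean2 by blast
    define N where "N = Suc n0"
    have N: "N > 0" "4 / (c * e\<^sup>2) < N" using n0 unfolding N_def by auto
    show "\<exists>M. \<forall>m\<ge>M. \<forall>n\<ge>M. norm (x m - x n) < e"
    proof (intro exI allI impI)
      fix a b assume ab: "N \<le> a" "N \<le> b"
      have ce: "c * e\<^sup>2 > 0" using c e by simp
      have Npos: "real N > 0" using N by simp
      have "real N \<le> real (Suc a)" "real N \<le> real (Suc b)" using ab by auto
      hence "1/Suc a \<le> 1/N" "1/Suc b \<le> 1/N" using Npos
        by (auto intro!: divide_left_mono simp del: of_nat_Suc)
      hence "c/2 * (norm (x a - x b))\<^sup>2 \<le> 2/N" using key[of a b] by linarith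
      also have "\<dots> < c/2 * e\<^sup>2"
      proof -
        have "4 < N * (c * e\<^sup>2)" using N(2) ce by (simp add: pos_divide_less_eq)
        hence "2 < (c/2 * e\<^sup>2) * N" by (simp add: algebra_simps)
        thus ?thesis using Npos by (simp add: pos_divide_less_eq)
      qed
      finally have "c/2 * (norm (x a - x b))\<^sup>2 < c/2 * e\<^sup>2" .
      hence "(norm (x a - x b))\<^sup>2 < e\<^sup>2" by (rule mult_left_less_imp_less) (use c in simp)
      thus "norm (x a - x b) < e" by (rule power_less_imp_less_base) (use e in simp)
    qed
  qed
  then obtain y where y: "x \<longlonglongrightarrow> y" using Cauchy_convergent_iff convergent_def by blast
  obtain Ky where Ky: "\<And>v. \<bar>D y v\<bar> \<le> Ky * norm v" using Dbd by blast
  have nz: "(\<lambda>n. norm (x n - y)) \<longlonglongrightarrow> 0" using y by (simp add: LIM_zero_iff tendsto_norm_zero)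
  have "(\<lambda>n. G (x n) - G y) \<longlonglongrightarrow> 0"
  proof -
    have eq: "G (x n) - G y = D y (x n - y) + R (x n - y)" for n
    proof -
      have "G (x n) = G (y + 1 *\<^sub>R (x n - y))" by simp
      also have "\<dots> = G y + 1 * D y (x n - y) + 1\<^sup>2 * R (x n - y)" by (rule expand)
      finally show ?thesis by simp
    qed
    have b: "\<bar>G (x n) - G y\<bar> \<le> \<bar>Ky\<bar> * norm (x n - y) + \<bar>C\<bar> * (norm (x n - y))\<^sup>2" for n
    proof -
      have "\<bar>R (x n - y)\<bar> \<le> \<bar>C\<bar> * (norm (x n - y))\<^sup>2"
        using Rhi[of "x n - y"] Rlo[of "x n - y"] c
      proof -
        have "0 \<le> c * (norm (x n - y))\<^sup>2" using c by simp
        moreover have "C * (norm (x n - y))\<^sup>2 \<le> \<bar>C\<bar> * (norm (x n - y))\<^sup>2"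
          by (rule mult_right_mono) auto
        ultimately show ?thesis using Rhi[of "x n - y"] Rlo[of "x n - y"] by linarith
      qed
      moreover have "\<bar>D y (x n - y)\<bar> \<le> \<bar>Ky\<bar> * norm (x n - y)"
      proof -
        have "Ky * norm (x n - y) \<le> \<bar>Ky\<bar> * norm (x n - y)" by (rule mult_right_mono) auto
        thus ?thesis using Ky[of "x n - y"] by linarith
      qed
      ultimately show ?thesis unfolding eq by linarith
    qed
    have "(\<lambda>n. \<bar>Ky\<bar> * norm (x n - y) + \<bar>C\<bar> * (norm (x n - y))\<^sup>2) \<longlonglongrightarrow> 0"
    proof -
      have "(\<lambda>n. \<bar>Ky\<bar> * norm (x n - y) + \<bar>C\<bar> * (norm (x n - y))\<^sup>2) \<longlonglongrightarrow> \<bar>Ky\<bar> * 0 + \<bar>C\<bar> * 0\<^sup>2"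
        by (intro tendsto_add tendsto_mult tendsto_const tendsto_power nz)
      thus ?thesis by simp
    qed
    moreover have "eventually (\<lambda>n. norm (G (x n) - G y) \<le> \<bar>Ky\<bar> * norm (x n - y) + \<bar>C\<bar> * (norm (x n - y))\<^sup>2) sequentially"
      using b by simp
    ultimately show ?thesis by (rule Lim_null_comparison[rotated])
  qed
  hence Gy: "(\<lambda>n. G (x n)) \<longlonglongrightarrow> G y" by (simp add: LIM_zero_iff)
  have "(\<lambda>n. m + 1 / Suc n) \<longlonglongrightarrow> m + 0"
    by (intro tendsto_add tendsto_const) (use LIMSEQ_inverse_real_of_nat in \<open>simp add: inverse_eq_divide\<close>)
  hence lim2: "(\<lambda>n. m + 1 / Suc n) \<longlonglongrightarrow> m" by simp
  have "G y \<le> m" by (rule LIMSEQ_le[OF Gy lim2]) (use x less_imp_le in blast)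
  hence "is_minimizer G y" unfolding is_minimizer_def using mle by (meson order.trans)
  thus ?thesis by blast
qed

lemma riesz:
  fixes \<phi> :: "'v::{real_inner,complete_space} \<Rightarrow> real"
  assumes lin: "\<And>w v t. \<phi> (w + t *\<^sub>R v) = \<phi> w + t * \<phi> v"
    and bd: "\<And>v. \<bar>\<phi> v\<bar> \<le> K * norm v"
  shows "\<exists>z. \<forall>v. \<phi> v = inner z v"
proof -
  define G where "G w = (norm w)\<^sup>2 / 2 - \<phi> w" for w
  define D where "D w v = inner w v - \<phi> v" for w v
  define R where "R v = (norm v)\<^sup>2 / 2" for v :: 'v
  have expand: "G (w + t *\<^sub>R v) = G w + t * D w v + t\<^sup>2 * R v" for w v t
    unfolding G_def D_def R_def lin power2_norm_eq_inner
    by (simp add: inner_add_left inner_add_right algebra_simps power2_eq_square inner_commute)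
  have "\<exists>K. \<forall>v. \<bar>D w v\<bar> \<le> K * norm v" for w
  proof (intro exI allI)
    fix v
    have "\<bar>D w v\<bar> \<le> \<bar>inner w v\<bar> + \<bar>\<phi> v\<bar>" unfolding D_def by linarith
    also have "\<dots> \<le> norm w * norm v + K * norm v" using Cauchy_Schwarz_ineq2 bd by (meson add_mono)
    finally show "\<bar>D w v\<bar> \<le> (norm w + K) * norm v" by (simp add: algebra_simps)
  qed
  then obtain z where z: "is_minimizer G z"
    using quad_exists_min[of G D R "1/2" "1/2", OF expand] unfolding R_def by auto
  have "D z v = 0" for v by (rule quad_first_order(1)[OF expand z])
  hence "\<forall>v. \<phi> v = inner z v" unfolding D_def by simp
  thus ?thesis by blast
qed

lemma powr_tangent:
  fixes x y q :: real
  assumes x: "x > 0" and y: "y \<ge> 0" and q: "0 < q" "q < 1"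
  shows "y powr q \<le> x powr q + q * x powr (q - 1) * (y - x)"
proof (cases "y = 0")
  case True
  have "x powr (q - 1) * x = x powr q" using x by (simp add: powr_diff)
  hence "x powr q + q * x powr (q - 1) * (y - x) = (1 - q) * x powr q"
    using True by (simp add: algebra_simps)
  moreover have "(1 - q) * x powr q \<ge> 0" using q by simp
  ultimately show ?thesis using True by simp
next
  case False
  hence y': "y > 0" using y by simp
  define z where "z = y / x"
  have z: "z > 0" unfolding z_def using x y' by simp
  have "z powr q * 1 powr (1 - q) \<le> q * z + (1 - q) * 1"
    by (rule Youngs_inequality_0) (use q z in auto)
  hence Y: "z powr q \<le> q * z + (1 - q)" by simp
  have "y powr q = x powr q * z powr q" unfolding z_def using x y' by (simp add: powr_divide)
  also have "\<dots> \<le> x powr q * (q * z + (1 - q))" using Y x by (simp add: mult_left_mono)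
  also have "\<dots> = x powr q + q * x powr (q - 1) * (y - x)"
  proof -
    have "x powr (q - 1) = x powr q / x" using x by (simp add: powr_diff)
    thus ?thesis unfolding z_def using x by (simp add: field_simps)
  qed
  finally show ?thesis .
qed

lemma max_eps_pos: "(\<epsilon>::real) > 0 \<Longrightarrow> 0 < max t (\<epsilon>\<^sup>2)"
  using zero_less_power[of \<epsilon> 2] max.cobounded2[of "\<epsilon>\<^sup>2" t] by linarith

definition Tn :: "real \<Rightarrow> real \<Rightarrow> real \<Rightarrow> real" where
  "Tn q a s = a powr q + q * a powr (q - 1) * (s - a)"

lemma Tn_ge: "a > 0 \<Longrightarrow> s \<ge> 0 \<Longrightarrow> 0 < q \<Longrightarrow> q < 1 \<Longrightarrow> s powr q \<le> Tn q a s"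
  unfolding Tn_def by (rule powr_tangent)

lemma Tn_mono:
  assumes a: "0 < a" "a \<le> x" and s: "0 \<le> s" "s \<le> a" and q: "0 < q" "q < 1"
  shows "Tn q a s \<le> Tn q x s"
proof -
  have x: "x > 0" using a by simp
  have "Tn q x s - Tn q a s = (Tn q x a - a powr q) + (q * x powr (q - 1) - q * a powr (q - 1)) * (s - a)"
    unfolding Tn_def by (simp add: algebra_simps)
  moreover have "Tn q x a - a powr q \<ge> 0" using Tn_ge[OF x, of a q] a q by simp
  moreover have "x powr (q - 1) \<le> a powr (q - 1)"
    using a q by (intro powr_mono2') auto
  hence "(q * x powr (q - 1) - q * a powr (q - 1)) * (s - a) \<ge> 0"
    using s q by (intro mult_nonpos_nonpos) (auto simp: mult_left_mono)
  ultimately show ?thesis by linarith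
qed

lemma psi_Tn:
  assumes e: "\<epsilon> > 0" and t: "t \<ge> 0"
  shows "psi p \<epsilon> t = Tn (p/2) (max t (\<epsilon>\<^sup>2)) t"
proof (cases "t < \<epsilon>\<^sup>2")
  case True
  have m: "max t (\<epsilon>\<^sup>2) = \<epsilon>\<^sup>2" using True by simp
  have e1: "(\<epsilon>\<^sup>2) powr (p/2) = \<epsilon> powr p" using e
    by (simp add: powr_powr flip: powr_numeral)
  have e2: "(\<epsilon>\<^sup>2) powr (p/2 - 1) = \<epsilon> powr (p - 2)" using e
    by (simp add: powr_powr algebra_simps flip: powr_numeral)
  have e3: "\<epsilon> powr (p - 2) * \<epsilon>\<^sup>2 = \<epsilon> powr p" using e
    by (simp add: powr_diff flip: powr_numeral)
  have e4: "t / \<epsilon> powr (2 - p) = t * \<epsilon> powr (p - 2)" using e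
    by (simp add: powr_minus_divide divide_inverse powr_minus[symmetric])
  have "psi p \<epsilon> t = p/2 * (t / \<epsilon> powr (2-p)) + (1-p/2)*\<epsilon> powr p"
    using True unfolding psi_def by simp
  also have "\<dots> = p/2 * (t * \<epsilon> powr (p - 2)) + (1-p/2)*\<epsilon> powr p" using e4 by simp
  finally have L: "psi p \<epsilon> t = p/2 * (t * \<epsilon> powr (p - 2)) + (1-p/2)*\<epsilon> powr p" .
  have "Tn (p/2) (max t (\<epsilon>\<^sup>2)) t = \<epsilon> powr p + p/2 * \<epsilon> powr (p - 2) * (t - \<epsilon>\<^sup>2)"
    unfolding Tn_def m e1 e2 ..
  also have "\<dots> = \<epsilon> powr p + p/2 * (t * \<epsilon> powr (p - 2)) - p/2 * (\<epsilon>\<^sup>2 * \<epsilon> powr (p - 2))"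
    by (simp add: right_diff_distrib left_diff_distrib mult_ac)
  finally have R: "Tn (p/2) (max t (\<epsilon>\<^sup>2)) t = \<epsilon> powr p + p/2 * (t * \<epsilon> powr (p - 2)) - p/2 * (\<epsilon>\<^sup>2 * \<epsilon> powr (p - 2))" .
  have x1: "p/2 * (\<epsilon>\<^sup>2 * \<epsilon> powr (p - 2)) = p/2 * \<epsilon> powr p" using e3 by (simp add: mult.commute)
  have x2: "(1-p/2)*\<epsilon> powr p = \<epsilon> powr p - p/2 * \<epsilon> powr p" by (simp add: algebra_simps)
  show ?thesis using L R x1 x2 by linarith
next
  case False
  thus ?thesis unfolding psi_def Tn_def by simp
qed

lemma dpsi_eq:
  assumes e: "\<epsilon> > 0" and t: "t \<ge> 0"
  shows "dpsi p \<epsilon> t = p/2 * (max t (\<epsilon>\<^sup>2)) powr (p/2 - 1)"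
proof (cases "t < \<epsilon>\<^sup>2")
  case True
  have e2: "(\<epsilon>\<^sup>2) powr (p/2 - 1) = \<epsilon> powr (p - 2)" using e
    by (simp add: powr_powr algebra_simps flip: powr_numeral)
  show ?thesis unfolding dpsi_def using True e2 by simp
next
  case False
  thus ?thesis unfolding dpsi_def by (simp add: diff_divide_distrib)
qed

lemma psi_concave:
  assumes e: "\<epsilon> > 0" and s: "s \<ge> 0" and t: "t \<ge> 0" and p: "0 < p" "p < 1"
  shows "psi p \<epsilon> s \<le> psi p \<epsilon> t + dpsi p \<epsilon> t * (s - t)"
proof -
  define q where "q = p/2"
  have q: "0 < q" "q < 1" using p unfolding q_def by auto
  define a where "a = max t (\<epsilon>\<^sup>2)"
  have a: "a > 0" "\<epsilon>\<^sup>2 \<le> a" unfolding a_def using max_eps_pos[OF e] by auto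
  have rhs: "psi p \<epsilon> t + dpsi p \<epsilon> t * (s - t) = Tn q a s"
    unfolding psi_Tn[OF e t] dpsi_eq[OF e t] Tn_def q_def a_def by (simp add: field_simps)
  have "psi p \<epsilon> s \<le> Tn q a s"
  proof (cases "s < \<epsilon>\<^sup>2")
    case True
    hence "psi p \<epsilon> s = Tn q (\<epsilon>\<^sup>2) s" unfolding psi_Tn[OF e s] q_def by simp
    also have "\<dots> \<le> Tn q a s" using True a e s q by (intro Tn_mono) auto
    finally show ?thesis .
  next
    case False
    hence "psi p \<epsilon> s = s powr q" unfolding psi_def q_def by simp
    also have "\<dots> \<le> Tn q a s" using a s q by (intro Tn_ge) auto
    finally show ?thesis .
  qed
  thus ?thesis using rhs by simp
qed

lemma psi_mono_eps:
  assumes e: "0 < \<epsilon>'" "\<epsilon>' \<le> \<epsilon>" and t: "t \<ge> 0" and p: "0 < p" "p < 1"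
  shows "psi p \<epsilon>' t \<le> psi p \<epsilon> t"
proof -
  define q where "q = p/2"
  have q: "0 < q" "q < 1" using p unfolding q_def by auto
  have ee: "\<epsilon>'\<^sup>2 \<le> \<epsilon>\<^sup>2" using e by (simp add: power_mono)
  have e0: "\<epsilon> > 0" using e by simp
  show ?thesis
  proof (cases "t < \<epsilon>'\<^sup>2")
    case True
    hence "psi p \<epsilon>' t = Tn q (\<epsilon>'\<^sup>2) t" unfolding psi_Tn[OF e(1) t] q_def by simp
    also have "\<dots> \<le> Tn q (\<epsilon>\<^sup>2) t" using True e ee t q by (intro Tn_mono) auto
    also have "\<dots> = psi p \<epsilon> t" unfolding psi_Tn[OF e0 t] q_def using True ee by simp
    finally show ?thesis .
  next
    case False
    hence "psi p \<epsilon>' t = t powr q" unfolding psi_def q_def by simp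
    also have "\<dots> \<le> Tn q (max t (\<epsilon>\<^sup>2)) t" using e0 t q max_eps_pos[OF e0] by (intro Tn_ge) auto
    also have "\<dots> = psi p \<epsilon> t" unfolding psi_Tn[OF e0 t] q_def ..
    finally show ?thesis .
  qed
qed

lemma psi_nonneg:
  assumes e: "\<epsilon> > 0" and t: "t \<ge> 0" and p: "0 < p" "p < 1"
  shows "psi p \<epsilon> t \<ge> 0"
proof -
  have "t powr (p/2) \<le> Tn (p/2) (max t (\<epsilon>\<^sup>2)) t" using e t p max_eps_pos[OF e] by (intro Tn_ge) auto
  thus ?thesis unfolding psi_Tn[OF e t] by (meson order.trans powr_ge_zero)
qed

lemma powr_le_1_plus:
  fixes t q :: real assumes "t \<ge> 0" "0 < q" "q < 1"
  shows "t powr q \<le> 1 + t"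
proof (cases "t \<le> 1")
  case True
  hence "t powr q \<le> 1" using assms by (intro powr_le1) auto
  thus ?thesis using assms by simp
next
  case False
  hence "t powr q \<le> t powr 1" using assms by (intro powr_mono) auto
  thus ?thesis using False by simp
qed

lemma psi_upper:
  assumes e: "\<epsilon> > 0" and t: "t \<ge> 0" and p: "0 < p" "p < 1"
  shows "psi p \<epsilon> t \<le> \<epsilon> powr p + 1 + t"
proof (cases "t < \<epsilon>\<^sup>2")
  case True
  have "psi p \<epsilon> t = Tn (p/2) (\<epsilon>\<^sup>2) t" unfolding psi_Tn[OF e t] using True by simp
  also have "\<dots> \<le> Tn (p/2) (\<epsilon>\<^sup>2) (\<epsilon>\<^sup>2)" unfolding Tn_def using True p
    by (intro add_left_mono mult_right_mono mult_left_mono) auto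
  also have "\<dots> = \<epsilon> powr p" unfolding Tn_def using e by (simp add: powr_powr flip: powr_numeral)
  finally show ?thesis using t by simp
next
  case False
  hence "psi p \<epsilon> t = t powr (p/2)" unfolding psi_def by simp
  also have "\<dots> \<le> 1 + t" using t p by (intro powr_le_1_plus) auto
  finally show ?thesis using powr_ge_zero[of \<epsilon> p] by linarith
qed

lemma dpsi_bounds:
  assumes e: "\<epsilon> > 0" and t: "t \<ge> 0" and p: "0 < p" "p < 1"
  shows "0 < dpsi p \<epsilon> t" "dpsi p \<epsilon> t \<le> p/2 * \<epsilon> powr (p - 2)"
proof -
  have m: "max t (\<epsilon>\<^sup>2) > 0" using e by (rule max_eps_pos)
  show "0 < dpsi p \<epsilon> t" unfolding dpsi_eq[OF e t] using p m by simp
  have "max t (\<epsilon>\<^sup>2) powr (p/2 - 1) \<le> (\<epsilon>\<^sup>2) powr (p/2 - 1)"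
    using p e by (intro powr_mono2') auto
  also have "(\<epsilon>\<^sup>2) powr (p/2 - 1) = \<epsilon> powr (p - 2)" using e
    by (simp add: powr_powr algebra_simps flip: powr_numeral)
  finally show "dpsi p \<epsilon> t \<le> p/2 * \<epsilon> powr (p - 2)" unfolding dpsi_eq[OF e t] using p
    by (simp add: mult_left_mono)
qed

lemma psi_measurable[measurable]: "psi p \<epsilon> \<in> borel_measurable borel"
  unfolding psi_def by measurable

lemma dpsi_measurable[measurable]: "dpsi p \<epsilon> \<in> borel_measurable borel"
  unfolding dpsi_def by measurable

lemma discr:
  fixes a b c :: real
  assumes "\<forall>t. 0 \<le> a + 2*b*t + c*t\<^sup>2" "c \<ge> 0"
  shows "b\<^sup>2 \<le> a * c"
proof (cases "c = 0")
  case True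
  have "b = 0"
  proof (rule ccontr)
    assume "b \<noteq> 0"
    have "0 \<le> a + 2*b*(-(\<bar>a\<bar>+1)/(2*b))" using assms(1) True by (metis mult_zero_left add_0_right)
    also have "\<dots> = a - \<bar>a\<bar> - 1" using \<open>b \<noteq> 0\<close> by (simp add: field_simps)
    finally show False by linarith
  qed
  thus ?thesis using True by simp
next
  case False
  hence c: "c > 0" using assms(2) by simp
  have "0 \<le> a + 2*b*(-b/c) + c*(-b/c)\<^sup>2" using assms(1) by blast
  also have "\<dots> = a - b\<^sup>2/c" using c by (simp add: field_simps power2_eq_square)
  finally show ?thesis using c by (simp add: field_simps)
qed

lemma sq_int_prod:
  fixes f g :: "'a \<Rightarrow> real"
  assumes "f \<in> borel_measurable M" "g \<in> borel_measurable M"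
    "integrable M (\<lambda>x. (f x)\<^sup>2)" "integrable M (\<lambda>x. (g x)\<^sup>2)"
  shows "integrable M (\<lambda>x. f x * g x)"
proof (rule Bochner_Integration.integrable_bound)
  show "integrable M (\<lambda>x. (f x)\<^sup>2 + (g x)\<^sup>2)" using assms by simp
  show "(\<lambda>x. f x * g x) \<in> borel_measurable M" using assms by simp
  show "AE x in M. norm (f x * g x) \<le> norm ((f x)\<^sup>2 + (g x)\<^sup>2)"
  proof (intro AE_I2)
    fix x
    have "0 \<le> (\<bar>f x\<bar> - \<bar>g x\<bar>)\<^sup>2" by simp
    hence "2 * \<bar>f x\<bar> * \<bar>g x\<bar> \<le> (f x)\<^sup>2 + (g x)\<^sup>2" by (simp add: power2_eq_square algebra_simps)
    moreover have "\<bar>f x * g x\<bar> = \<bar>f x\<bar> * \<bar>g x\<bar>" by (rule abs_mult)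
    moreover have "0 \<le> \<bar>f x\<bar> * \<bar>g x\<bar>" by simp
    moreover have "\<bar>(f x)\<^sup>2 + (g x)\<^sup>2\<bar> = (f x)\<^sup>2 + (g x)\<^sup>2" by simp
    ultimately show "norm (f x * g x) \<le> norm ((f x)\<^sup>2 + (g x)\<^sup>2)"
      unfolding real_norm_def by linarith
  qed
qed

lemma sq_int_wprod:
  fixes f g a :: "'a \<Rightarrow> real"
  assumes "f \<in> borel_measurable M" "g \<in> borel_measurable M"
    "integrable M (\<lambda>x. (f x)\<^sup>2)" "integrable M (\<lambda>x. (g x)\<^sup>2)"
    "a \<in> borel_measurable M" "\<And>x. \<bar>a x\<bar> \<le> A"
  shows "integrable M (\<lambda>x. a x * f x * g x)"
proof (rule Bochner_Integration.integrable_bound)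
  show "integrable M (\<lambda>x. A * (f x * g x))" using sq_int_prod[OF assms(1-4)] by simp
  show "(\<lambda>x. a x * f x * g x) \<in> borel_measurable M" using assms by simp
  show "AE x in M. norm (a x * f x * g x) \<le> norm (A * (f x * g x))"
  proof (intro AE_I2)
    fix x
    have "\<bar>a x\<bar> * \<bar>f x * g x\<bar> \<le> A * \<bar>f x * g x\<bar>" using assms(6) by (rule mult_right_mono) simp
    moreover have "A \<ge> 0" using assms(6)[of x] by linarith
    ultimately show "norm (a x * f x * g x) \<le> norm (A * (f x * g x))"
      by (simp add: abs_mult mult.assoc)
  qed
qed

lemma sq_int_CS:
  fixes f g :: "'a \<Rightarrow> real"
  assumes "f \<in> borel_measurable M" "g \<in> borel_measurable M"
    "integrable M (\<lambda>x. (f x)\<^sup>2)" "integrable M (\<lambda>x. (g x)\<^sup>2)"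
  shows "(LINT x|M. f x * g x)\<^sup>2 \<le> (LINT x|M. (f x)\<^sup>2) * (LINT x|M. (g x)\<^sup>2)"
proof (rule discr)
  have fg: "integrable M (\<lambda>x. f x * g x)" by (rule sq_int_prod[OF assms])
  show "\<forall>t. 0 \<le> (LINT x|M. (f x)\<^sup>2) + 2 * (LINT x|M. f x * g x) * t + (LINT x|M. (g x)\<^sup>2) * t\<^sup>2"
  proof
    fix t
    have "0 \<le> (LINT x|M. (f x + t * g x)\<^sup>2)" by (rule integral_nonneg_AE) simp
    also have "(LINT x|M. (f x + t * g x)\<^sup>2) = (LINT x|M. (f x)\<^sup>2 + (2 * t) * (f x * g x) + t\<^sup>2 * (g x)\<^sup>2)"
      by (simp add: power2_eq_square algebra_simps)
    also have "\<dots> = (LINT x|M. (f x)\<^sup>2) + 2 * (LINT x|M. f x * g x) * t + (LINT x|M. (g x)\<^sup>2) * t\<^sup>2"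
    proof -
      have i1: "integrable M (\<lambda>x. (2 * t) * (f x * g x))" using fg by simp
      have i2: "integrable M (\<lambda>x. t\<^sup>2 * (g x)\<^sup>2)" using assms by simp
      have i3: "integrable M (\<lambda>x. (f x)\<^sup>2 + (2 * t) * (f x * g x))" using i1 assms by simp
      have "(LINT x|M. (f x)\<^sup>2 + (2 * t) * (f x * g x) + t\<^sup>2 * (g x)\<^sup>2)
          = (LINT x|M. (f x)\<^sup>2 + (2 * t) * (f x * g x)) + (LINT x|M. t\<^sup>2 * (g x)\<^sup>2)"
        by (rule Bochner_Integration.integral_add[OF i3 i2])
      also have "(LINT x|M. (f x)\<^sup>2 + (2 * t) * (f x * g x)) = (LINT x|M. (f x)\<^sup>2) + (LINT x|M. (2 * t) * (f x * g x))"
        by (rule Bochner_Integration.integral_add[OF assms(3) i1])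
      finally show ?thesis by simp
    qed
    finally show "0 \<le> (LINT x|M. (f x)\<^sup>2) + 2 * (LINT x|M. f x * g x) * t + (LINT x|M. (g x)\<^sup>2) * t\<^sup>2" .
  qed
  show "0 \<le> (LINT x|M. (g x)\<^sup>2)" by (rule integral_nonneg_AE) simp
qed

locale setting =
  fixes \<Omega> :: "'d::euclidean_space set" and \<iota> :: "'v::{real_inner,complete_space} \<Rightarrow> 'd \<Rightarrow> real"
  assumes finM: "finite_measure (lebesgue_on \<Omega>)" and emb: "compact_dense_embedding \<Omega> \<iota>"
begin

abbreviation "M \<equiv> lebesgue_on \<Omega>"

lemmas embD = emb[unfolded compact_dense_embedding_def]

lemma iota_lin: "\<iota> (a *\<^sub>R u + b *\<^sub>R w) x = a * \<iota> u x + b * \<iota> w x"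
  using conjunct1[OF embD] by blast

lemma iota_add: "\<iota> (u + w) x = \<iota> u x + \<iota> w x"
  using iota_lin[of 1 u 1 w x] by simp

lemma iota_scale: "\<iota> (a *\<^sub>R u) x = a * \<iota> u x"
  using iota_lin[of a u 0 u x] by simp

lemma iota_diff: "\<iota> (u - w) x = \<iota> u x - \<iota> w x"
  using iota_lin[of 1 u "-1" w x] by simp

lemma iota_SI: "sq_integrable_on \<Omega> (\<iota> u)"
  using conjunct1[OF conjunct2[OF embD]] by blast

lemma iota_meas[measurable]: "\<iota> u \<in> borel_measurable M"
  using iota_SI unfolding sq_integrable_on_def by blast

lemma iota_sq: "integrable M (\<lambda>x. (\<iota> u x)\<^sup>2)"
  using iota_SI unfolding sq_integrable_on_def by blast

lemma int_const: "integrable M (\<lambda>x. c)"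
  using finite_measure.integrable_const[OF finM] .

lemma Cemb_ex: "\<exists>C\<ge>0. \<forall>u. (LINT x|M. (\<iota> u x)\<^sup>2) \<le> C * (norm u)\<^sup>2"
proof -
  obtain C where C: "\<And>u. L2dist2 \<Omega> (\<iota> u) (\<lambda>_. 0) \<le> C * (norm u)\<^sup>2"
    using conjunct1[OF conjunct2[OF conjunct2[OF conjunct2[OF embD]]]] by blast
  have "(LINT x|M. (\<iota> u x)\<^sup>2) \<le> max C 0 * (norm u)\<^sup>2" for u
  proof -
    have "(LINT x|M. (\<iota> u x)\<^sup>2) \<le> C * (norm u)\<^sup>2" using C[of u] unfolding L2dist2_def by simp
    also have "\<dots> \<le> max C 0 * (norm u)\<^sup>2" by (rule mult_right_mono) auto
    finally show ?thesis .
  qed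
  thus ?thesis by (intro exI[of _ "max C 0"]) auto
qed

definition Cemb where "Cemb = (SOME C. C \<ge> 0 \<and> (\<forall>u. (LINT x|M. (\<iota> u x)\<^sup>2) \<le> C * (norm u)\<^sup>2))"

lemma Cemb: "Cemb \<ge> 0" "(LINT x|M. (\<iota> u x)\<^sup>2) \<le> Cemb * (norm u)\<^sup>2"
  using someI_ex[OF Cemb_ex] unfolding Cemb_def by blast+

definition qf where "qf a u = (LINT x|M. a x * (\<iota> u x * \<iota> u x))"
definition Bf where "Bf a u v = (LINT x|M. a x * (\<iota> u x * \<iota> v x))"

lemma qf_Bf: "qf a u = Bf a u u" unfolding qf_def Bf_def ..

lemma Bf_int:
  assumes "a \<in> borel_measurable M" "\<And>x. \<bar>a x\<bar> \<le> A"
  shows "integrable M (\<lambda>x. a x * (\<iota> u x * \<iota> v x))"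
  using sq_int_wprod[of "\<iota> u" M "\<iota> v" a A, OF iota_meas iota_meas iota_sq iota_sq assms]
  by (simp add: mult.assoc)

lemma Bf_expand:
  assumes "a \<in> borel_measurable M" "\<And>x. \<bar>a x\<bar> \<le> A"
  shows "Bf a w (v + t *\<^sub>R z) = Bf a w v + t * Bf a w z"
proof -
  have "(\<lambda>x. a x * (\<iota> w x * \<iota> (v + t *\<^sub>R z) x)) = (\<lambda>x. a x * (\<iota> w x * \<iota> v x) + t * (a x * (\<iota> w x * \<iota> z x)))"
    unfolding iota_add iota_scale by (rule ext) (simp add: algebra_simps)
  hence "Bf a w (v + t *\<^sub>R z) = (LINT x|M. a x * (\<iota> w x * \<iota> v x) + t * (a x * (\<iota> w x * \<iota> z x)))"
    unfolding Bf_def by simp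
  also have "\<dots> = Bf a w v + t * Bf a w z"
    unfolding Bf_def using Bf_int[OF assms] by simp
  finally show ?thesis .
qed

lemma Bf_sym: "Bf a u v = Bf a v u" unfolding Bf_def by (simp add: mult_ac)

lemma qf_expand:
  assumes "a \<in> borel_measurable M" "\<And>x. \<bar>a x\<bar> \<le> A"
  shows "qf a (w + t *\<^sub>R v) = qf a w + 2 * t * Bf a w v + t\<^sup>2 * qf a v"
proof -
  have "(\<lambda>x. a x * (\<iota> (w + t *\<^sub>R v) x * \<iota> (w + t *\<^sub>R v) x)) = (\<lambda>x. a x * (\<iota> w x * \<iota> w x) + (2 * t) * (a x * (\<iota> w x * \<iota> v x))
        + t\<^sup>2 * (a x * (\<iota> v x * \<iota> v x)))"
    unfolding iota_add iota_scale by (rule ext) (simp add: algebra_simps power2_eq_square)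
  hence "qf a (w + t *\<^sub>R v) = (LINT x|M. a x * (\<iota> w x * \<iota> w x) + (2 * t) * (a x * (\<iota> w x * \<iota> v x))
        + t\<^sup>2 * (a x * (\<iota> v x * \<iota> v x)))"
    unfolding qf_def by simp
  also have "\<dots> = qf a w + 2 * t * Bf a w v + t\<^sup>2 * qf a v"
    unfolding qf_def Bf_def using Bf_int[OF assms] by simp
  finally show ?thesis .
qed

lemma qf_nonneg:
  assumes "\<And>x. a x \<ge> 0" shows "qf a u \<ge> 0"
  unfolding qf_def using assms by (intro integral_nonneg_AE) auto

lemma qf_le:
  assumes "a \<in> borel_measurable M" "\<And>x. 0 \<le> a x" "\<And>x. a x \<le> A"
  shows "qf a u \<le> A * Cemb * (norm u)\<^sup>2"
proof -
  have "qf a u \<le> (LINT x|M. A * (\<iota> u x)\<^sup>2)"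
    unfolding qf_def
  proof (rule integral_mono)
    show "integrable M (\<lambda>x. a x * (\<iota> u x * \<iota> u x))" using Bf_int[of a A u u] assms by auto
    show "integrable M (\<lambda>x. A * (\<iota> u x)\<^sup>2)" using iota_sq by simp
    show "a x * (\<iota> u x * \<iota> u x) \<le> A * (\<iota> u x)\<^sup>2" for x
      using assms by (simp add: power2_eq_square mult_right_mono)
  qed
  also have "\<dots> = A * (LINT x|M. (\<iota> u x)\<^sup>2)" by simp
  also have "\<dots> \<le> A * (Cemb * (norm u)\<^sup>2)"
    using Cemb assms(2,3)[of undefined] by (intro mult_left_mono) auto
  finally show ?thesis by simp
qed

lemma Bf_CS:
  assumes "a \<in> borel_measurable M" "\<And>x. 0 \<le> a x" "\<And>x. a x \<le> A"
  shows "(Bf a u v)\<^sup>2 \<le> qf a u * qf a v"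
proof (rule discr)
  have ab: "\<bar>a x\<bar> \<le> A" for x using assms(2,3)[of x] by simp
  show "\<forall>t. 0 \<le> qf a u + 2 * Bf a u v * t + qf a v * t\<^sup>2"
  proof
    fix t
    have "0 \<le> qf a (u + t *\<^sub>R v)" by (rule qf_nonneg[OF assms(2)])
    also have "\<dots> = qf a u + 2 * t * Bf a u v + t\<^sup>2 * qf a v" by (rule qf_expand[OF assms(1) ab])
    also have "\<dots> = qf a u + 2 * Bf a u v * t + qf a v * t\<^sup>2" by (simp add: mult_ac)
    finally show "0 \<le> qf a u + 2 * Bf a u v * t + qf a v * t\<^sup>2" .
  qed
  show "0 \<le> qf a v" by (rule qf_nonneg[OF assms(2)])
qed

lemma Bf_bound:
  assumes "a \<in> borel_measurable M" "\<And>x. 0 \<le> a x" "\<And>x. a x \<le> A"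
  shows "\<bar>Bf a u v\<bar> \<le> sqrt (qf a u) * sqrt (A * Cemb) * norm v"
proof -
  have "\<bar>Bf a u v\<bar> \<le> sqrt (qf a u * qf a v)"
    using Bf_CS[OF assms, of u v] by (simp add: real_le_rsqrt)
  also have "\<dots> = sqrt (qf a u) * sqrt (qf a v)" by (simp add: real_sqrt_mult)
  also have "sqrt (qf a v) \<le> sqrt (A * Cemb * (norm v)\<^sup>2)" using qf_le[OF assms] by simp
  hence "sqrt (qf a u) * sqrt (qf a v) \<le> sqrt (qf a u) * sqrt (A * Cemb * (norm v)\<^sup>2)"
    using qf_nonneg[OF assms(2), where u=u] by (intro mult_left_mono) auto
  also have "sqrt (A * Cemb * (norm v)\<^sup>2) = sqrt (A * Cemb) * norm v" by (simp add: real_sqrt_mult)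
  finally show ?thesis by (simp add: mult.assoc)
qed

end

lemma norm_expand: "(norm (x + t *\<^sub>R v))\<^sup>2 = (norm x)\<^sup>2 + 2 * t * inner x v + t\<^sup>2 * (norm v)\<^sup>2"
  for x v :: "'a::real_inner"
  unfolding power2_norm_eq_inner by (simp add: inner_add_left inner_add_right inner_commute power2_eq_square algebra_simps)

context setting
begin

definition wgt where "wgt p \<epsilon> uk x = dpsi p \<epsilon> ((\<iota> uk x)\<^sup>2)"

lemma wgt_meas[measurable]: "wgt p \<epsilon> uk \<in> borel_measurable M"
  unfolding wgt_def by measurable

context
  fixes p \<epsilon> :: real
  assumes p: "0 < p" "p < 1" and e: "\<epsilon> > 0"
begin

lemma wgt_pos: "0 < wgt p \<epsilon> uk x" unfolding wgt_def using dpsi_bounds(1)[OF e _ p] by simp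
lemma wgt_nn: "0 \<le> wgt p \<epsilon> uk x" using wgt_pos less_imp_le by blast
lemma wgt_le: "wgt p \<epsilon> uk x \<le> p/2 * \<epsilon> powr (p - 2)" unfolding wgt_def using dpsi_bounds(2)[OF e _ p] by simp
lemma wgt_abs: "\<bar>wgt p \<epsilon> uk x\<bar> \<le> p/2 * \<epsilon> powr (p - 2)" using wgt_nn wgt_le by simp

lemma psi_int: "integrable M (\<lambda>x. psi p \<epsilon> ((\<iota> u x)\<^sup>2))"
proof (rule Bochner_Integration.integrable_bound)
  show "integrable M (\<lambda>x. \<epsilon> powr p + 1 + (\<iota> u x)\<^sup>2)"
    by (intro Bochner_Integration.integrable_add int_const iota_sq)
  show "(\<lambda>x. psi p \<epsilon> ((\<iota> u x)\<^sup>2)) \<in> borel_measurable M" by measurable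
  show "AE x in M. norm (psi p \<epsilon> ((\<iota> u x)\<^sup>2)) \<le> norm (\<epsilon> powr p + 1 + (\<iota> u x)\<^sup>2)"
  proof (intro AE_I2)
    fix x
    have "0 \<le> psi p \<epsilon> ((\<iota> u x)\<^sup>2)" using psi_nonneg[OF e _ p] by simp
    moreover have "psi p \<epsilon> ((\<iota> u x)\<^sup>2) \<le> \<epsilon> powr p + 1 + (\<iota> u x)\<^sup>2" using psi_upper[OF e _ p] by simp
    moreover have "0 \<le> \<epsilon> powr p + 1 + (\<iota> u x)\<^sup>2" by (simp add: add_nonneg_nonneg)
    ultimately show "norm (psi p \<epsilon> ((\<iota> u x)\<^sup>2)) \<le> norm (\<epsilon> powr p + 1 + (\<iota> u x)\<^sup>2)" by simp
  qed
qed

lemma wgt_Bf_int: "integrable M (\<lambda>x. wgt p \<epsilon> uk x * (\<iota> u x * \<iota> v x))"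
  by (rule Bf_int[OF wgt_meas wgt_abs])

lemma Qsplit:
  "Qobj \<Omega> \<iota> F F' \<alpha> \<beta> p \<epsilon> uk L u =
     F uk + F' uk (u - uk) + L / 2 * (norm (u - uk))\<^sup>2 + \<alpha> / 2 * (norm u)\<^sup>2 +
     \<beta> * ((LINT x|M. psi p \<epsilon> ((\<iota> uk x)\<^sup>2)) - qf (wgt p \<epsilon> uk) uk) + \<beta> * qf (wgt p \<epsilon> uk) u"
proof -
  have "(\<lambda>x. psi p \<epsilon> ((\<iota> uk x)\<^sup>2) + dpsi p \<epsilon> ((\<iota> uk x)\<^sup>2) * ((\<iota> u x)\<^sup>2 - (\<iota> uk x)\<^sup>2))
      = (\<lambda>x. (psi p \<epsilon> ((\<iota> uk x)\<^sup>2) - wgt p \<epsilon> uk x * (\<iota> uk x * \<iota> uk x)) + wgt p \<epsilon> uk x * (\<iota> u x * \<iota> u x))"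
    unfolding wgt_def by (rule ext) (simp add: algebra_simps power2_eq_square)
  hence "(LINT x|M. psi p \<epsilon> ((\<iota> uk x)\<^sup>2) + dpsi p \<epsilon> ((\<iota> uk x)\<^sup>2) * ((\<iota> u x)\<^sup>2 - (\<iota> uk x)\<^sup>2))
     = (LINT x|M. (psi p \<epsilon> ((\<iota> uk x)\<^sup>2) - wgt p \<epsilon> uk x * (\<iota> uk x * \<iota> uk x)) + wgt p \<epsilon> uk x * (\<iota> u x * \<iota> u x))"
    by simp
  also have "\<dots> = (LINT x|M. psi p \<epsilon> ((\<iota> uk x)\<^sup>2) - wgt p \<epsilon> uk x * (\<iota> uk x * \<iota> uk x)) + qf (wgt p \<epsilon> uk) u"
    unfolding qf_def
    by (rule Bochner_Integration.integral_add) (use psi_int wgt_Bf_int in auto)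
  also have "(LINT x|M. psi p \<epsilon> ((\<iota> uk x)\<^sup>2) - wgt p \<epsilon> uk x * (\<iota> uk x * \<iota> uk x))
      = (LINT x|M. psi p \<epsilon> ((\<iota> uk x)\<^sup>2)) - qf (wgt p \<epsilon> uk) uk"
    unfolding qf_def
    by (rule Bochner_Integration.integral_diff) (use psi_int wgt_Bf_int in auto)
  finally have I: "(LINT x|M. psi p \<epsilon> ((\<iota> uk x)\<^sup>2) + dpsi p \<epsilon> ((\<iota> uk x)\<^sup>2) * ((\<iota> u x)\<^sup>2 - (\<iota> uk x)\<^sup>2))
     = (LINT x|M. psi p \<epsilon> ((\<iota> uk x)\<^sup>2)) - qf (wgt p \<epsilon> uk) uk + qf (wgt p \<epsilon> uk) u" .
  show ?thesis unfolding Qobj_def I by (simp add: algebra_simps)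
qed

definition DQ :: "('v \<Rightarrow> 'v \<Rightarrow>\<^sub>L real) \<Rightarrow> real \<Rightarrow> real \<Rightarrow> 'v \<Rightarrow> real \<Rightarrow> 'v \<Rightarrow> 'v \<Rightarrow> real" where "DQ F' \<alpha> \<beta> uk L w v =
   F' uk v + L * inner (w - uk) v + \<alpha> * inner w v + 2 * \<beta> * Bf (wgt p \<epsilon> uk) w v"
definition RQ where "RQ \<alpha> \<beta> uk L v = (L + \<alpha>) / 2 * (norm v)\<^sup>2 + \<beta> * qf (wgt p \<epsilon> uk) v"

lemma Qexpand:
  "Qobj \<Omega> \<iota> F F' \<alpha> \<beta> p \<epsilon> uk L (w + t *\<^sub>R v) =
   Qobj \<Omega> \<iota> F F' \<alpha> \<beta> p \<epsilon> uk L w + t * DQ F' \<alpha> \<beta> uk L w v + t\<^sup>2 * RQ \<alpha> \<beta> uk L v"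
proof -
  have n1: "(norm (w + t *\<^sub>R v - uk))\<^sup>2 = (norm (w - uk))\<^sup>2 + 2 * t * inner (w - uk) v + t\<^sup>2 * (norm v)\<^sup>2"
    using norm_expand[of "w - uk" t v] by (simp add: algebra_simps)
  have n2: "(norm (w + t *\<^sub>R v))\<^sup>2 = (norm w)\<^sup>2 + 2 * t * inner w v + t\<^sup>2 * (norm v)\<^sup>2"
    by (rule norm_expand)
  have f: "F' uk (w + t *\<^sub>R v - uk) = F' uk (w - uk) + t * F' uk v"
    by (simp add: blinfun.bilinear_simps algebra_simps)
  have q: "qf (wgt p \<epsilon> uk) (w + t *\<^sub>R v) = qf (wgt p \<epsilon> uk) w + 2 * t * Bf (wgt p \<epsilon> uk) w v + t\<^sup>2 * qf (wgt p \<epsilon> uk) v"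
    by (rule qf_expand[OF wgt_meas wgt_abs])
  show ?thesis unfolding Qsplit n1 n2 f q DQ_def RQ_def by (simp add: algebra_simps)
qed

lemma Q_min_exists:
  assumes "L \<ge> 0" "\<alpha> > 0" "\<beta> > 0"
  shows "\<exists>w. is_minimizer (Qobj \<Omega> \<iota> F F' \<alpha> \<beta> p \<epsilon> uk L) w"
proof (rule quad_exists_min[OF Qexpand])
  define A where "A = p/2 * \<epsilon> powr (p - 2)"
  show "\<alpha>/2 * (norm v)\<^sup>2 \<le> RQ \<alpha> \<beta> uk L v" for v
  proof -
    have "0 \<le> \<beta> * qf (wgt p \<epsilon> uk) v" using assms qf_nonneg[OF wgt_nn] by simp
    moreover have "\<alpha>/2 * (norm v)\<^sup>2 \<le> (L + \<alpha>)/2 * (norm v)\<^sup>2" using assms by (intro mult_right_mono) auto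
    ultimately show ?thesis unfolding RQ_def by linarith
  qed
  show "\<alpha>/2 > 0" using assms by simp
  show "RQ \<alpha> \<beta> uk L v \<le> ((L + \<alpha>)/2 + \<beta> * (A * Cemb)) * (norm v)\<^sup>2" for v
  proof -
    have "qf (wgt p \<epsilon> uk) v \<le> A * Cemb * (norm v)\<^sup>2" unfolding A_def
      by (rule qf_le[OF wgt_meas wgt_nn wgt_le])
    hence "\<beta> * qf (wgt p \<epsilon> uk) v \<le> \<beta> * (A * Cemb * (norm v)\<^sup>2)" using assms by (intro mult_left_mono) auto
    thus ?thesis unfolding RQ_def by (simp add: algebra_simps)
  qed
  show "\<exists>K. \<forall>v. \<bar>DQ F' \<alpha> \<beta> uk L w v\<bar> \<le> K * norm v" for w
  proof (intro exI allI)
    fix v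
    have b1: "\<bar>F' uk v\<bar> \<le> norm (F' uk) * norm v" using norm_blinfun[of "F' uk" v] by simp
    have b2: "\<bar>L * inner (w - uk) v\<bar> \<le> \<bar>L\<bar> * norm (w - uk) * norm v"
      using Cauchy_Schwarz_ineq2[of "w - uk" v] by (simp add: abs_mult mult.assoc mult_left_mono)
    have b3: "\<bar>\<alpha> * inner w v\<bar> \<le> \<bar>\<alpha>\<bar> * norm w * norm v"
      using Cauchy_Schwarz_ineq2[of w v] by (simp add: abs_mult mult.assoc mult_left_mono)
    have "\<bar>Bf (wgt p \<epsilon> uk) w v\<bar> \<le> sqrt (qf (wgt p \<epsilon> uk) w) * sqrt (A * Cemb) * norm v"
      unfolding A_def by (rule Bf_bound[OF wgt_meas wgt_nn wgt_le])
    hence b4: "\<bar>2 * \<beta> * Bf (wgt p \<epsilon> uk) w v\<bar> \<le> \<bar>2 * \<beta>\<bar> * (sqrt (qf (wgt p \<epsilon> uk) w) * sqrt (A * Cemb) * norm v)"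
      by (simp add: abs_mult mult_left_mono)
    have "\<bar>DQ F' \<alpha> \<beta> uk L w v\<bar> \<le> \<bar>F' uk v\<bar> + \<bar>L * inner (w - uk) v\<bar> + \<bar>\<alpha> * inner w v\<bar> + \<bar>2 * \<beta> * Bf (wgt p \<epsilon> uk) w v\<bar>"
      unfolding DQ_def by linarith
    also have "\<dots> \<le> (norm (F' uk) + \<bar>L\<bar> * norm (w - uk) + \<bar>\<alpha>\<bar> * norm w + \<bar>2 * \<beta>\<bar> * (sqrt (qf (wgt p \<epsilon> uk) w) * sqrt (A * Cemb))) * norm v"
      using b1 b2 b3 b4 by (simp add: algebra_simps)
    finally show "\<bar>DQ F' \<alpha> \<beta> uk L w v\<bar> \<le> (norm (F' uk) + \<bar>L\<bar> * norm (w - uk) + \<bar>\<alpha>\<bar> * norm w + \<bar>2 * \<beta>\<bar> * (sqrt (qf (wgt p \<epsilon> uk) w) * sqrt (A * Cemb))) * norm v" .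
  qed
qed

lemma Q_foc:
  assumes "is_minimizer (Qobj \<Omega> \<iota> F F' \<alpha> \<beta> p \<epsilon> uk L) w"
  shows "DQ F' \<alpha> \<beta> uk L w v = 0"
    and "Qobj \<Omega> \<iota> F F' \<alpha> \<beta> p \<epsilon> uk L z = Qobj \<Omega> \<iota> F F' \<alpha> \<beta> p \<epsilon> uk L w + RQ \<alpha> \<beta> uk L (z - w)"
  by (rule quad_first_order[OF Qexpand assms])+

definition Jf :: "('v \<Rightarrow> real) \<Rightarrow> real \<Rightarrow> real \<Rightarrow> 'v \<Rightarrow> real" where "Jf F \<alpha> \<beta> u = F u + \<alpha> / 2 * (norm u)\<^sup>2 + \<beta> * (LINT x|M. psi p \<epsilon> ((\<iota> u x)\<^sup>2))"

lemma Q_center: "Qobj \<Omega> \<iota> F F' \<alpha> \<beta> p \<epsilon> uk L uk = Jf F \<alpha> \<beta> uk"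
  unfolding Qobj_def Jf_def by simp

lemma Q_lower:
  fixes F' :: "'v \<Rightarrow> 'v \<Rightarrow>\<^sub>L real"
  assumes "L \<ge> 0" "\<beta> > 0"
  shows "F uk + F' uk (w - uk) + \<alpha> / 2 * (norm w)\<^sup>2 \<le> Qobj \<Omega> \<iota> F F' \<alpha> \<beta> p \<epsilon> uk L w"
proof -
  have "0 \<le> (LINT x|M. psi p \<epsilon> ((\<iota> uk x)\<^sup>2) + dpsi p \<epsilon> ((\<iota> uk x)\<^sup>2) * ((\<iota> w x)\<^sup>2 - (\<iota> uk x)\<^sup>2))"
  proof (rule integral_nonneg_AE, intro AE_I2)
    fix x
    have "psi p \<epsilon> ((\<iota> w x)\<^sup>2) \<le> psi p \<epsilon> ((\<iota> uk x)\<^sup>2) + dpsi p \<epsilon> ((\<iota> uk x)\<^sup>2) * ((\<iota> w x)\<^sup>2 - (\<iota> uk x)\<^sup>2)"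
      by (rule psi_concave[OF e _ _ p]) auto
    moreover have "0 \<le> psi p \<epsilon> ((\<iota> w x)\<^sup>2)" by (rule psi_nonneg[OF e _ p]) simp
    ultimately show "0 \<le> psi p \<epsilon> ((\<iota> uk x)\<^sup>2) + dpsi p \<epsilon> ((\<iota> uk x)\<^sup>2) * ((\<iota> w x)\<^sup>2 - (\<iota> uk x)\<^sup>2)" by linarith
  qed
  moreover have "0 \<le> L / 2 * (norm (w - uk))\<^sup>2" using assms by simp
  ultimately show ?thesis unfolding Qobj_def using assms by simp
qed

lemma J_le_Q:
  fixes F' :: "'v \<Rightarrow> 'v \<Rightarrow>\<^sub>L real"
  assumes "Dcond F F' uk L w" and that: "\<beta> > 0"
  shows "Jf F \<alpha> \<beta> w \<le> Qobj \<Omega> \<iota> F F' \<alpha> \<beta> p \<epsilon> uk L w + L / 2 * (norm (w - uk))\<^sup>2"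
proof -
  have "(LINT x|M. psi p \<epsilon> ((\<iota> w x)\<^sup>2)) \<le> (LINT x|M. psi p \<epsilon> ((\<iota> uk x)\<^sup>2) + dpsi p \<epsilon> ((\<iota> uk x)\<^sup>2) * ((\<iota> w x)\<^sup>2 - (\<iota> uk x)\<^sup>2))"
  proof (rule integral_mono)
    show "integrable M (\<lambda>x. psi p \<epsilon> ((\<iota> w x)\<^sup>2))" by (rule psi_int)
    have "(\<lambda>x. psi p \<epsilon> ((\<iota> uk x)\<^sup>2) + dpsi p \<epsilon> ((\<iota> uk x)\<^sup>2) * ((\<iota> w x)\<^sup>2 - (\<iota> uk x)\<^sup>2))
      = (\<lambda>x. (psi p \<epsilon> ((\<iota> uk x)\<^sup>2) - wgt p \<epsilon> uk x * (\<iota> uk x * \<iota> uk x)) + wgt p \<epsilon> uk x * (\<iota> w x * \<iota> w x))"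
      unfolding wgt_def by (rule ext) (simp add: algebra_simps power2_eq_square)
    moreover have "integrable M (\<lambda>x. (psi p \<epsilon> ((\<iota> uk x)\<^sup>2) - wgt p \<epsilon> uk x * (\<iota> uk x * \<iota> uk x)) + wgt p \<epsilon> uk x * (\<iota> w x * \<iota> w x))"
      using psi_int wgt_Bf_int by auto
    ultimately show "integrable M (\<lambda>x. psi p \<epsilon> ((\<iota> uk x)\<^sup>2) + dpsi p \<epsilon> ((\<iota> uk x)\<^sup>2) * ((\<iota> w x)\<^sup>2 - (\<iota> uk x)\<^sup>2))"
      by simp
    show "psi p \<epsilon> ((\<iota> w x)\<^sup>2) \<le> psi p \<epsilon> ((\<iota> uk x)\<^sup>2) + dpsi p \<epsilon> ((\<iota> uk x)\<^sup>2) * ((\<iota> w x)\<^sup>2 - (\<iota> uk x)\<^sup>2)" for x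
      by (rule psi_concave[OF e _ _ p]) auto
  qed
  hence "\<beta> * (LINT x|M. psi p \<epsilon> ((\<iota> w x)\<^sup>2)) \<le> \<beta> * (LINT x|M. psi p \<epsilon> ((\<iota> uk x)\<^sup>2) + dpsi p \<epsilon> ((\<iota> uk x)\<^sup>2) * ((\<iota> w x)\<^sup>2 - (\<iota> uk x)\<^sup>2))"
    using that by (intro mult_left_mono) auto
  moreover have "F w \<le> F uk + F' uk (w - uk) + L * (norm (w - uk))\<^sup>2" using assms(1) unfolding Dcond_def .
  ultimately show ?thesis unfolding Jf_def Qobj_def by linarith
qed

end
end

lemma abs_le_sqrt: "(x::real)\<^sup>2 \<le> y \<Longrightarrow> \<bar>x\<bar> \<le> sqrt y"
  by (metis real_sqrt_abs real_sqrt_le_mono)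

lemma weak_sub: "weak_conv u w \<Longrightarrow> strict_mono s \<Longrightarrow> weak_conv (u \<circ> s) w"
  unfolding weak_conv_def using LIMSEQ_subseq_LIMSEQ by (fastforce simp: o_def)

lemma blinfun_weak:
  fixes f :: "'v::{real_inner,complete_space} \<Rightarrow>\<^sub>L real"
  assumes "weak_conv u w"
  shows "(\<lambda>n. f (u n)) \<longlonglongrightarrow> f w"
proof -
  have "\<exists>z. \<forall>v. f v = inner z v"
  proof (rule riesz)
    show "f (a + t *\<^sub>R v) = f a + t * f v" for a t v by (simp add: blinfun.bilinear_simps)
    show "\<bar>f v\<bar> \<le> norm f * norm v" for v using norm_blinfun[of f v] by simp
  qed
  then obtain z where z: "\<And>v. f v = inner z v" by blast
  have "(\<lambda>n. inner (u n) z) \<longlonglongrightarrow> inner w z" using assms unfolding weak_conv_def by blast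
  thus ?thesis unfolding z by (simp add: inner_commute)
qed

lemma sq_int_diff:
  fixes f g :: "'a \<Rightarrow> real"
  assumes "f \<in> borel_measurable M" "g \<in> borel_measurable M"
    "integrable M (\<lambda>x. (f x)\<^sup>2)" "integrable M (\<lambda>x. (g x)\<^sup>2)"
  shows "integrable M (\<lambda>x. (f x - g x)\<^sup>2)"
proof -
  have "(\<lambda>x. (f x - g x)\<^sup>2) = (\<lambda>x. (f x)\<^sup>2 - 2 * (f x * g x) + (g x)\<^sup>2)"
    by (rule ext) (simp add: power2_eq_square algebra_simps)
  moreover have "integrable M (\<lambda>x. (f x)\<^sup>2 - 2 * (f x * g x) + (g x)\<^sup>2)"
    using sq_int_prod[OF assms] assms by simp
  ultimately show ?thesis by simp
qed

context setting
begin

lemma int_const_sq: "integrable M (\<lambda>x. (c::real)\<^sup>2)" by (rule int_const)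

lemma SI_prod_int:
  assumes "g \<in> borel_measurable M" "integrable M (\<lambda>x. (g x)\<^sup>2)"
  shows "integrable M (\<lambda>x. \<iota> v x * g x)"
  by (rule sq_int_prod[OF iota_meas assms(1) iota_sq assms(2)])

lemma weak_L2:
  assumes wc: "weak_conv u w" and g: "g \<in> borel_measurable M" "integrable M (\<lambda>x. (g x)\<^sup>2)"
  shows "(\<lambda>n. LINT x|M. \<iota> (u n) x * g x) \<longlonglongrightarrow> (LINT x|M. \<iota> w x * g x)"
proof -
  define \<phi> where "\<phi> v = (LINT x|M. \<iota> v x * g x)" for v
  have "\<exists>z. \<forall>v. \<phi> v = inner z v"
  proof (rule riesz)
    show "\<phi> (a + t *\<^sub>R v) = \<phi> a + t * \<phi> v" for a t v
    proof -
      have "(\<lambda>x. \<iota> (a + t *\<^sub>R v) x * g x) = (\<lambda>x. \<iota> a x * g x + t * (\<iota> v x * g x))"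
        unfolding iota_add iota_scale by (rule ext) (simp add: algebra_simps)
      hence "\<phi> (a + t *\<^sub>R v) = (LINT x|M. \<iota> a x * g x + t * (\<iota> v x * g x))" unfolding \<phi>_def by simp
      also have "\<dots> = \<phi> a + t * \<phi> v" unfolding \<phi>_def using SI_prod_int[OF g] by simp
      finally show ?thesis .
    qed
    show "\<bar>\<phi> v\<bar> \<le> (sqrt Cemb * sqrt (LINT x|M. (g x)\<^sup>2)) * norm v" for v
    proof -
      have "(\<phi> v)\<^sup>2 \<le> (LINT x|M. (\<iota> v x)\<^sup>2) * (LINT x|M. (g x)\<^sup>2)"
        unfolding \<phi>_def by (rule sq_int_CS[OF iota_meas g(1) iota_sq g(2)])
      hence "\<bar>\<phi> v\<bar> \<le> sqrt ((LINT x|M. (\<iota> v x)\<^sup>2) * (LINT x|M. (g x)\<^sup>2))" by (rule abs_le_sqrt)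
      also have "\<dots> \<le> sqrt ((Cemb * (norm v)\<^sup>2) * (LINT x|M. (g x)\<^sup>2))"
        using Cemb(2)[of v] by (intro real_sqrt_le_mono mult_right_mono integral_nonneg_AE) auto
      also have "\<dots> = (sqrt Cemb * sqrt (LINT x|M. (g x)\<^sup>2)) * norm v" by (simp add: real_sqrt_mult)
      finally show ?thesis .
    qed
  qed
  then obtain z where z: "\<And>v. \<phi> v = inner z v" by blast
  have "(\<lambda>n. inner (u n) z) \<longlonglongrightarrow> inner w z" using wc unfolding weak_conv_def by blast
  thus ?thesis using z unfolding \<phi>_def by (simp add: inner_commute)
qed

lemma strong_L2:
  assumes wc: "weak_conv u w" and bd: "bounded (range u)"
  shows "\<exists>s. strict_mono s \<and> (\<lambda>n. LINT x|M. (\<iota> (u (s n)) x - \<iota> w x)\<^sup>2) \<longlonglongrightarrow> 0"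
proof -
  obtain s f where s: "strict_mono s" and f: "sq_integrable_on \<Omega> f"
    and lim: "(\<lambda>n. L2dist2 \<Omega> (\<iota> (u (s n))) f) \<longlonglongrightarrow> 0"
    using conjunct1[OF conjunct2[OF conjunct2[OF conjunct2[OF conjunct2[OF embD]]]]] bd by blast
  have fm[measurable]: "f \<in> borel_measurable M" and f2: "integrable M (\<lambda>x. (f x)\<^sup>2)"
    using f unfolding sq_integrable_on_def by auto
  define g where "g x = f x - \<iota> w x" for x
  have gm[measurable]: "g \<in> borel_measurable M" unfolding g_def by measurable
  have g2: "integrable M (\<lambda>x. (g x)\<^sup>2)" unfolding g_def by (rule sq_int_diff[OF fm iota_meas f2 iota_sq])
  have lim': "(\<lambda>n. LINT x|M. (\<iota> (u (s n)) x - f x)\<^sup>2) \<longlonglongrightarrow> 0" using lim unfolding L2dist2_def .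
  have d2: "integrable M (\<lambda>x. (\<iota> (u (s n)) x - f x)\<^sup>2)" for n by (rule sq_int_diff[OF iota_meas fm iota_sq f2])
  have A1: "(\<lambda>n. LINT x|M. \<iota> (u (s n)) x * g x) \<longlonglongrightarrow> (LINT x|M. \<iota> w x * g x)"
    using weak_L2[OF weak_sub[OF wc s] gm g2] by (simp add: o_def)
  have A2: "(\<lambda>n. LINT x|M. \<iota> (u (s n)) x * g x) \<longlonglongrightarrow> (LINT x|M. f x * g x)"
  proof -
    have fg: "integrable M (\<lambda>x. f x * g x)" by (rule sq_int_prod[OF fm gm f2 g2])
    have eq: "(LINT x|M. \<iota> (u (s n)) x * g x) - (LINT x|M. f x * g x) = (LINT x|M. (\<iota> (u (s n)) x - f x) * g x)" for n
      using SI_prod_int[OF gm g2] fg by (simp add: left_diff_distrib)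
    have bnd: "\<bar>(LINT x|M. (\<iota> (u (s n)) x - f x) * g x)\<bar> \<le> sqrt (LINT x|M. (\<iota> (u (s n)) x - f x)\<^sup>2) * sqrt (LINT x|M. (g x)\<^sup>2)" for n
    proof -
      have "(LINT x|M. (\<iota> (u (s n)) x - f x) * g x)\<^sup>2 \<le> (LINT x|M. (\<iota> (u (s n)) x - f x)\<^sup>2) * (LINT x|M. (g x)\<^sup>2)"
        by (rule sq_int_CS) (use d2 g2 in auto)
      hence "\<bar>(LINT x|M. (\<iota> (u (s n)) x - f x) * g x)\<bar> \<le> sqrt ((LINT x|M. (\<iota> (u (s n)) x - f x)\<^sup>2) * (LINT x|M. (g x)\<^sup>2))"
        by (rule abs_le_sqrt)
      thus ?thesis by (simp add: real_sqrt_mult)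
    qed
    have "(\<lambda>n. sqrt (LINT x|M. (\<iota> (u (s n)) x - f x)\<^sup>2) * sqrt (LINT x|M. (g x)\<^sup>2)) \<longlonglongrightarrow> sqrt 0 * sqrt (LINT x|M. (g x)\<^sup>2)"
      by (intro tendsto_mult tendsto_real_sqrt lim' tendsto_const)
    hence "(\<lambda>n. sqrt (LINT x|M. (\<iota> (u (s n)) x - f x)\<^sup>2) * sqrt (LINT x|M. (g x)\<^sup>2)) \<longlonglongrightarrow> 0" by simp
    hence "(\<lambda>n. (LINT x|M. \<iota> (u (s n)) x * g x) - (LINT x|M. f x * g x)) \<longlonglongrightarrow> 0"
      unfolding eq by (rule Lim_null_comparison[rotated]) (use bnd in simp)
    thus ?thesis by (simp add: LIM_zero_iff)
  qed
  have "(LINT x|M. \<iota> w x * g x) = (LINT x|M. f x * g x)" using A1 A2 by (rule LIMSEQ_unique)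
  hence g0: "(LINT x|M. (g x)\<^sup>2) = 0"
  proof -
    assume h: "(LINT x|M. \<iota> w x * g x) = (LINT x|M. f x * g x)"
    have "(LINT x|M. (g x)\<^sup>2) = (LINT x|M. f x * g x - \<iota> w x * g x)"
      unfolding g_def by (simp add: power2_eq_square algebra_simps)
    also have "\<dots> = (LINT x|M. f x * g x) - (LINT x|M. \<iota> w x * g x)"
      using sq_int_prod[OF fm gm f2 g2] SI_prod_int[OF gm g2] by simp
    finally show ?thesis using h by simp
  qed
  have bnd: "(LINT x|M. (\<iota> (u (s n)) x - \<iota> w x)\<^sup>2) \<le> 2 * (LINT x|M. (\<iota> (u (s n)) x - f x)\<^sup>2) + 2 * (LINT x|M. (g x)\<^sup>2)" for n
  proof -
    have "(LINT x|M. (\<iota> (u (s n)) x - \<iota> w x)\<^sup>2) \<le> (LINT x|M. 2 * (\<iota> (u (s n)) x - f x)\<^sup>2 + 2 * (g x)\<^sup>2)"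
    proof (rule integral_mono)
      show "integrable M (\<lambda>x. (\<iota> (u (s n)) x - \<iota> w x)\<^sup>2)" by (rule sq_int_diff[OF iota_meas iota_meas iota_sq iota_sq])
      show "integrable M (\<lambda>x. 2 * (\<iota> (u (s n)) x - f x)\<^sup>2 + 2 * (g x)\<^sup>2)" using d2 g2 by simp
      show "(\<iota> (u (s n)) x - \<iota> w x)\<^sup>2 \<le> 2 * (\<iota> (u (s n)) x - f x)\<^sup>2 + 2 * (g x)\<^sup>2" for x
      proof -
        have "0 \<le> (\<iota> (u (s n)) x - f x - g x)\<^sup>2" by simp
        thus ?thesis unfolding g_def by (simp add: power2_eq_square algebra_simps)
      qed
    qed
    also have "\<dots> = 2 * (LINT x|M. (\<iota> (u (s n)) x - f x)\<^sup>2) + 2 * (LINT x|M. (g x)\<^sup>2)"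
      using d2 g2 by simp
    finally show ?thesis .
  qed
  have "(\<lambda>n. 2 * (LINT x|M. (\<iota> (u (s n)) x - f x)\<^sup>2) + 2 * (LINT x|M. (g x)\<^sup>2)) \<longlonglongrightarrow> 2 * 0 + 2 * 0"
    unfolding g0 by (intro tendsto_add tendsto_mult tendsto_const lim')
  moreover have "eventually (\<lambda>n. norm (LINT x|M. (\<iota> (u (s n)) x - \<iota> w x)\<^sup>2) \<le> 2 * (LINT x|M. (\<iota> (u (s n)) x - f x)\<^sup>2) + 2 * (LINT x|M. (g x)\<^sup>2)) sequentially"
  proof (rule always_eventually, rule allI)
    fix n
    have "0 \<le> (LINT x|M. (\<iota> (u (s n)) x - \<iota> w x)\<^sup>2)" by (rule integral_nonneg_AE) simp
    thus "norm (LINT x|M. (\<iota> (u (s n)) x - \<iota> w x)\<^sup>2) \<le> 2 * (LINT x|M. (\<iota> (u (s n)) x - f x)\<^sup>2) + 2 * (LINT x|M. (g x)\<^sup>2)"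
      using bnd[of n] by simp
  qed
  ultimately have "(\<lambda>n. LINT x|M. (\<iota> (u (s n)) x - \<iota> w x)\<^sup>2) \<longlonglongrightarrow> 0"
    by (simp add: Lim_null_comparison)
  thus ?thesis using s by blast
qed

lemma L2_AE:
  fixes h :: "nat \<Rightarrow> 'd \<Rightarrow> real" and h0 :: "'d \<Rightarrow> real"
  assumes hm[measurable]: "\<And>n. h n \<in> borel_measurable M" and h2: "\<And>n. integrable M (\<lambda>x. (h n x)\<^sup>2)"
    and h0m[measurable]: "h0 \<in> borel_measurable M" and h02: "integrable M (\<lambda>x. (h0 x)\<^sup>2)"
    and lim: "(\<lambda>n. LINT x|M. (h n x - h0 x)\<^sup>2) \<longlonglongrightarrow> 0"
  shows "\<exists>s. strict_mono s \<and> (AE x in M. (\<lambda>n. h (s n) x) \<longlonglongrightarrow> h0 x)"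
proof -
  define d where "d n x = h n x - h0 x" for n x
  have dm[measurable]: "d n \<in> borel_measurable M" for n unfolding d_def by measurable
  have d2: "integrable M (\<lambda>x. (d n x)\<^sup>2)" for n unfolding d_def by (rule sq_int_diff) (auto intro: hm h0m h2 h02)
  have one: "integrable M (\<lambda>x. (1::real)\<^sup>2)" by (rule int_const)
  have dint: "integrable M (d n)" for n
    using sq_int_prod[OF dm _ d2 one, of n] by simp
  have bnd: "(LINT x|M. norm (d n x)) \<le> sqrt ((LINT x|M. (d n x)\<^sup>2) * (LINT x|M. (1::real)\<^sup>2))" for n
  proof -
    have "(LINT x|M. \<bar>d n x\<bar> * 1)\<^sup>2 \<le> (LINT x|M. (\<bar>d n x\<bar>)\<^sup>2) * (LINT x|M. (1::real)\<^sup>2)"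
      by (rule sq_int_CS) (use d2 one in auto)
    thus ?thesis by (simp add: real_le_rsqrt)
  qed
  have "(\<lambda>n. sqrt ((LINT x|M. (d n x)\<^sup>2) * (LINT x|M. (1::real)\<^sup>2))) \<longlonglongrightarrow> sqrt (0 * (LINT x|M. (1::real)\<^sup>2))"
    using lim unfolding d_def by (intro tendsto_real_sqrt tendsto_mult tendsto_const)
  hence "(\<lambda>n. sqrt ((LINT x|M. (d n x)\<^sup>2) * (LINT x|M. (1::real)\<^sup>2))) \<longlonglongrightarrow> 0" by simp
  moreover have "eventually (\<lambda>n. norm (LINT x|M. norm (d n x)) \<le> sqrt ((LINT x|M. (d n x)\<^sup>2) * (LINT x|M. (1::real)\<^sup>2))) sequentially"
  proof (rule always_eventually, rule allI)
    fix n
    have "0 \<le> (LINT x|M. norm (d n x))" by (rule integral_nonneg_AE) simp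
    thus "norm (LINT x|M. norm (d n x)) \<le> sqrt ((LINT x|M. (d n x)\<^sup>2) * (LINT x|M. (1::real)\<^sup>2))"
      using bnd[of n] by simp
  qed
  ultimately have "(\<lambda>n. LINT x|M. norm (d n x)) \<longlonglongrightarrow> 0"
    by (simp add: Lim_null_comparison)
  then obtain s where s: "strict_mono s" "AE x in M. (\<lambda>n. d (s n) x) \<longlonglongrightarrow> 0"
    using tendsto_L1_AE_subseq[of M d, OF dint] by blast
  have "AE x in M. (\<lambda>n. h (s n) x) \<longlonglongrightarrow> h0 x"
    using s(2) by eventually_elim (simp add: d_def LIM_zero_iff)
  thus ?thesis using s(1) by blast
qed

end

lemma quad_bound:
  fixes a b c s :: real
  assumes a: "a > 0" and s: "s \<ge> 0" and h: "a * s\<^sup>2 - b * s \<le> c"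
  shows "s \<le> 1 + 2 * \<bar>b\<bar> / a + 2 * \<bar>c\<bar> / a"
proof -
  have nb: "0 \<le> 2 * \<bar>b\<bar> / a" "0 \<le> 2 * \<bar>c\<bar> / a" using a by auto
  show ?thesis
  proof (cases "s \<le> 1 \<or> s \<le> 2 * \<bar>b\<bar> / a")
    case True thus ?thesis using nb by auto
  next
    case False
    hence s1: "s > 1" and sb: "2 * \<bar>b\<bar> < a * s" using a by (auto simp: field_simps)
    have "b * s \<le> \<bar>b\<bar> * s" using s by (intro mult_right_mono) auto
    also have "\<dots> \<le> a * s / 2 * s" using sb s by (intro mult_right_mono) auto
    finally have "a * s\<^sup>2 / 2 \<le> c" using h by (simp add: power2_eq_square field_simps)
    hence "s\<^sup>2 \<le> 2 * c / a" using a by (simp add: field_simps)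
    moreover have "s \<le> s\<^sup>2" using s1 by (simp add: power2_eq_square)
    moreover have "2 * c / a \<le> 2 * \<bar>c\<bar> / a" using a by (simp add: divide_right_mono)
    ultimately show ?thesis using nb by linarith
  qed
qed

lemma taylor_bound:
  fixes F :: "'v::real_normed_vector \<Rightarrow> real" and F' :: "'v \<Rightarrow> 'v \<Rightarrow>\<^sub>L real"
  assumes der: "\<And>y. (F has_derivative blinfun_apply (F' y)) (at y)"
    and lip: "lipschitz_on M1 S F'" and conv: "convex S" and xS: "x \<in> S" and yS: "y \<in> S"
  shows "F y \<le> F x + F' x (y - x) + M1 * (norm (y - x))\<^sup>2"
proof (cases "y = x")
  case True thus ?thesis by simp
next
  case False
  define d where "d = y - x"
  define \<phi> where "\<phi> t = F (x + t *\<^sub>R d) - t * F' x d" for t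
  have M1: "M1 \<ge> 0" using lip unfolding lipschitz_on_def by blast
  have D: "DERIV \<phi> t :> (F' (x + t *\<^sub>R d) d - F' x d)" for t
  proof -
    have "((\<lambda>t. x + t *\<^sub>R d) has_derivative (\<lambda>h. h *\<^sub>R d)) (at t)"
      by (auto intro!: derivative_eq_intros)
    from has_derivative_compose[OF this der]
    have "((\<lambda>t. F (x + t *\<^sub>R d)) has_derivative (\<lambda>h. F' (x + t *\<^sub>R d) (h *\<^sub>R d))) (at t)" .
    hence "DERIV (\<lambda>t. F (x + t *\<^sub>R d)) t :> F' (x + t *\<^sub>R d) d"
      by (rule has_derivative_imp_has_field_derivative) (simp add: blinfun.scaleR_right)
    moreover have "DERIV (\<lambda>t. t * F' x d) t :> F' x d" by (auto intro!: derivative_eq_intros)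
    ultimately show ?thesis unfolding \<phi>_def by (rule DERIV_diff)
  qed
  obtain z where z: "0 < z" "z < 1" "\<phi> 1 - \<phi> 0 = (1 - 0) * (F' (x + z *\<^sub>R d) d - F' x d)"
    using MVT2[of 0 1 \<phi>, OF _ D] by auto
  have zS: "x + z *\<^sub>R d \<in> S"
  proof -
    have "x + z *\<^sub>R d = (1 - z) *\<^sub>R x + z *\<^sub>R y" unfolding d_def by (simp add: algebra_simps)
    thus ?thesis using convexD[OF conv xS yS, of "1 - z" z] z by auto
  qed
  have "F' (x + z *\<^sub>R d) d - F' x d = (F' (x + z *\<^sub>R d) - F' x) d" by (simp add: blinfun.diff_left)
  also have "\<dots> \<le> norm (F' (x + z *\<^sub>R d) - F' x) * norm d"
    using norm_blinfun[of "F' (x + z *\<^sub>R d) - F' x" d] by simp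
  also have "norm (F' (x + z *\<^sub>R d) - F' x) \<le> M1 * norm (z *\<^sub>R d)"
    using lip zS xS unfolding lipschitz_on_def dist_norm by (metis add_diff_cancel_left')
  hence "norm (F' (x + z *\<^sub>R d) - F' x) * norm d \<le> M1 * norm (z *\<^sub>R d) * norm d"
    by (intro mult_right_mono) auto
  also have "M1 * norm (z *\<^sub>R d) * norm d \<le> M1 * (norm d)\<^sup>2"
  proof -
    have "z * (norm d * norm d) \<le> norm d * norm d" using z by (intro mult_left_le_one_le) auto
    hence "M1 * (z * (norm d * norm d)) \<le> M1 * (norm d * norm d)" using M1 by (rule mult_left_mono)
    thus ?thesis using z by (simp add: power2_eq_square mult.assoc)
  qed
  finally have "\<phi> 1 - \<phi> 0 \<le> M1 * (norm d)\<^sup>2" using z(3) by simp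
  thus ?thesis unfolding \<phi>_def d_def by simp
qed

lemma lim_liminf_ennreal:
  assumes "(y :: nat \<Rightarrow> real) \<longlonglongrightarrow> y0"
  shows "liminf (\<lambda>n. ennreal (y n)) = ennreal y0"
  by (rule lim_imp_Liminf) (use assms in auto)

lemma fatou_bound:
  fixes h :: "nat \<Rightarrow> 'a \<Rightarrow> real" and g :: "'a \<Rightarrow> real" and U :: "nat \<Rightarrow> real"
  assumes hm: "\<And>n. h n \<in> borel_measurable N" and hi: "\<And>n. integrable N (h n)"
    and hnn: "\<And>n x. 0 \<le> h n x" and gi: "integrable N g" and gnn: "\<And>x. 0 \<le> g x"
    and ae: "AE x in N. ennreal (g x) \<le> liminf (\<lambda>n. ennreal (h n x))"
    and U: "\<And>n. (LINT x|N. h n x) \<le> U n" and Ulim: "U \<longlonglongrightarrow> T"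
  shows "(LINT x|N. g x) \<le> T"
proof -
  have T0: "T \<ge> 0"
  proof (rule LIMSEQ_le_const[OF Ulim], intro exI allI impI)
    fix n :: nat
    have "0 \<le> (LINT x|N. h n x)" by (rule integral_nonneg_AE) (simp add: hnn)
    thus "0 \<le> U n" using U[of n] by linarith
  qed
  have "ennreal (LINT x|N. g x) = (\<integral>\<^sup>+ x. ennreal (g x) \<partial>N)"
    by (rule nn_integral_eq_integral[symmetric]) (use gi gnn in auto)
  also have "\<dots> \<le> (\<integral>\<^sup>+ x. liminf (\<lambda>n. ennreal (h n x)) \<partial>N)"
    by (rule nn_integral_mono_AE[OF ae])
  also have "\<dots> \<le> liminf (\<lambda>n. \<integral>\<^sup>+ x. ennreal (h n x) \<partial>N)"
    by (rule nn_integral_liminf) (use hm in simp)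
  also have "(\<lambda>n. \<integral>\<^sup>+ x. ennreal (h n x) \<partial>N) = (\<lambda>n. ennreal (LINT x|N. h n x))"
    by (rule ext, rule nn_integral_eq_integral) (use hi hnn in auto)
  also have "liminf (\<lambda>n. ennreal (LINT x|N. h n x)) \<le> liminf (\<lambda>n. ennreal (U n))"
    by (rule Liminf_mono) (use U in \<open>auto intro!: always_eventually ennreal_leI\<close>)
  also have "\<dots> = ennreal T" by (rule lim_liminf_ennreal[OF Ulim])
  finally show ?thesis using T0 by simp
qed

context setting
begin

lemma double_AE:
  fixes a b :: "nat \<Rightarrow> 'v" and w :: 'v
  assumes wa: "weak_conv a w" and wb: "weak_conv b w"
    and ba: "bounded (range a)" and bb: "bounded (range b)"
  shows "\<exists>\<sigma>. strict_mono \<sigma> \<and> (AE x in M. (\<lambda>n. \<iota> (a (\<sigma> n)) x) \<longlonglongrightarrow> \<iota> w x)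
              \<and> (AE x in M. (\<lambda>n. \<iota> (b (\<sigma> n)) x) \<longlonglongrightarrow> \<iota> w x)"
proof -
  obtain s1 where s1: "strict_mono s1" "(\<lambda>n. LINT x|M. (\<iota> (a (s1 n)) x - \<iota> w x)\<^sup>2) \<longlonglongrightarrow> 0"
    using strong_L2[OF wa ba] by blast
  have wb1: "weak_conv (b \<circ> s1) w" by (rule weak_sub[OF wb s1(1)])
  have bb1: "bounded (range (b \<circ> s1))" using bb by (rule bounded_subset) auto
  obtain s2 where s2: "strict_mono s2" "(\<lambda>n. LINT x|M. (\<iota> ((b \<circ> s1) (s2 n)) x - \<iota> w x)\<^sup>2) \<longlonglongrightarrow> 0"
    using strong_L2[OF wb1 bb1] by blast
  have la2: "(\<lambda>n. LINT x|M. (\<iota> (a (s1 (s2 n))) x - \<iota> w x)\<^sup>2) \<longlonglongrightarrow> 0"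
    using LIMSEQ_subseq_LIMSEQ[OF s1(2) s2(1)] by (simp add: o_def)
  obtain s3 where s3: "strict_mono s3" "AE x in M. (\<lambda>n. \<iota> (a (s1 (s2 (s3 n)))) x) \<longlonglongrightarrow> \<iota> w x"
    using L2_AE[of "\<lambda>n. \<iota> (a (s1 (s2 n)))" "\<iota> w", OF iota_meas iota_sq iota_meas iota_sq la2] by blast
  have lb3: "(\<lambda>n. LINT x|M. (\<iota> (b (s1 (s2 (s3 n)))) x - \<iota> w x)\<^sup>2) \<longlonglongrightarrow> 0"
    using LIMSEQ_subseq_LIMSEQ[OF s2(2) s3(1)] by (simp add: o_def)
  obtain s4 where s4: "strict_mono s4" "AE x in M. (\<lambda>n. \<iota> (b (s1 (s2 (s3 (s4 n))))) x) \<longlonglongrightarrow> \<iota> w x"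
    using L2_AE[of "\<lambda>n. \<iota> (b (s1 (s2 (s3 n))))" "\<iota> w", OF iota_meas iota_sq iota_meas iota_sq lb3] by blast
  define \<sigma> where "\<sigma> = s1 \<circ> s2 \<circ> s3 \<circ> s4"
  have sm: "strict_mono \<sigma>" unfolding \<sigma>_def using s1(1) s2(1) s3(1) s4(1) by (intro strict_mono_o)
  have "AE x in M. (\<lambda>n. \<iota> (a (\<sigma> n)) x) \<longlonglongrightarrow> \<iota> w x"
    using s3(2)
  proof eventually_elim
    case (elim x)
    from LIMSEQ_subseq_LIMSEQ[OF elim s4(1)] show ?case by (simp add: \<sigma>_def o_def)
  qed
  moreover have "AE x in M. (\<lambda>n. \<iota> (b (\<sigma> n)) x) \<longlonglongrightarrow> \<iota> w x"
    using s4(2) by (simp add: \<sigma>_def o_def)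
  ultimately show ?thesis using sm by blast
qed

end

lemma pw_lim:
  fixes f g e :: "nat \<Rightarrow> real"
  assumes f: "f \<longlonglongrightarrow> f0" and g: "g \<longlonglongrightarrow> f0" and e: "e \<longlonglongrightarrow> 0" and f0: "f0 \<noteq> 0"
  shows "(\<lambda>n. 2 * \<beta> * (dpsi p (e n) ((f n)\<^sup>2) * (g n * g n))) \<longlonglongrightarrow> \<beta> * p * \<bar>f0\<bar> powr p"
proof -
  have "(\<lambda>n. (f n)\<^sup>2 - (e n)\<^sup>2) \<longlonglongrightarrow> f0\<^sup>2 - 0\<^sup>2" by (intro tendsto_intros f e)
  moreover have "f0\<^sup>2 - 0\<^sup>2 > 0" using f0 by simp
  ultimately have ev: "eventually (\<lambda>n. (f n)\<^sup>2 - (e n)\<^sup>2 > 0) sequentially" by (rule order_tendstoD)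
  have eq: "eventually (\<lambda>n. 2 * \<beta> * (p/2 * ((f n)\<^sup>2) powr ((p - 2)/2)) * (g n * g n)
      = 2 * \<beta> * (dpsi p (e n) ((f n)\<^sup>2) * (g n * g n))) sequentially"
    using ev by eventually_elim (simp add: dpsi_def)
  have L1: "(\<lambda>n. 2 * \<beta> * (p/2 * ((f n)\<^sup>2) powr ((p - 2)/2)) * (g n * g n))
      \<longlonglongrightarrow> 2 * \<beta> * (p/2 * (f0\<^sup>2) powr ((p - 2)/2)) * (f0 * f0)"
    using f0 by (intro tendsto_intros tendsto_powr f g) auto
  have V: "2 * \<beta> * (p/2 * (f0\<^sup>2) powr ((p - 2)/2)) * (f0 * f0) = \<beta> * p * \<bar>f0\<bar> powr p"
  proof -
    have a: "\<bar>f0\<bar> > 0" using f0 by simp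
    have s: "f0\<^sup>2 = \<bar>f0\<bar> powr 2" using a by (simp add: powr_numeral)
    have "(f0\<^sup>2) powr ((p - 2)/2) = \<bar>f0\<bar> powr (p - 2)" unfolding s powr_powr by (rule arg_cong[where f="\<lambda>t. \<bar>f0\<bar> powr t"]) (simp add: field_simps)
    moreover have "\<bar>f0\<bar> powr (p - 2) * (f0 * f0) = \<bar>f0\<bar> powr p"
    proof -
      have t: "\<bar>f0\<bar> powr (p - 2) * \<bar>f0\<bar> powr 2 = \<bar>f0\<bar> powr p"
        using powr_add[of "\<bar>f0\<bar>" "p - 2" 2] by simp
      have "f0 * f0 = \<bar>f0\<bar> powr 2" using s by (simp only: power2_eq_square)
      thus ?thesis using t by (simp only:)
    qed
    ultimately show ?thesis by (simp add: algebra_simps)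
  qed
  from L1 have "(\<lambda>n. 2 * \<beta> * (p/2 * ((f n)\<^sup>2) powr ((p - 2)/2)) * (g n * g n)) \<longlonglongrightarrow> \<beta> * p * \<bar>f0\<bar> powr p"
    unfolding V .
  from Lim_transform_eventually[OF this eq] show ?thesis .
qed

theorem theorem7p8:
  fixes \<Omega> :: "'d::euclidean_space set"
    and \<iota> :: "'v::{real_inner,complete_space} \<Rightarrow> 'd \<Rightarrow> real"
    and F :: "'v \<Rightarrow> real" and F' :: "'v \<Rightarrow> ('v \<Rightarrow>\<^sub>L real)"
    and \<alpha> \<beta> p \<gamma> Lt :: real and \<epsilon> :: "nat \<Rightarrow> real" and u0 :: 'v
    and L :: "nat \<Rightarrow> real" and u :: "nat \<Rightarrow> 'v" and r :: "nat \<Rightarrow> nat" and ubar :: 'v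
  assumes dom: "lipschitz_domain \<Omega>" "bounded \<Omega>"
    and emb: "compact_dense_embedding \<Omega> \<iota>"
    and AI: "assumption_I_F F F'"
    and params: "\<alpha> > 0" "\<beta> > 0" "0 < p" "p < 1"
    and eps: "decseq \<epsilon>" "\<forall>k. \<epsilon> k > 0" "\<epsilon> \<longlonglongrightarrow> 0"
    and gam: "\<gamma> > 1" and Lt: "Lt > 0"
    and alg: "algorithmA \<Omega> \<iota> F F' \<alpha> \<beta> p \<epsilon> \<gamma> Lt u0 L u"
    and sub: "strict_mono r" "weak_conv (u \<circ> r) ubar"
  shows "\<exists>lam :: 'v \<Rightarrow>\<^sub>L real.
           (\<forall>v. \<alpha> * inner ubar v + \<beta> * lam v = - F' ubar v) \<and>
           lam ubar \<ge> p * (LINT x|lebesgue_on \<Omega>. \<bar>\<iota> ubar x\<bar> powr p)"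
proof -
  have opn: "open \<Omega>" using dom(1) unfolding lipschitz_domain_def by blast
  have finM: "finite_measure (lebesgue_on \<Omega>)"
    by (rule finite_measure_lebesgue_on[OF lmeasurable_open[OF dom(2) opn]])
  interpret S: setting \<Omega> \<iota> by (rule setting.intro[OF finM emb])
  have pp: "0 < p" "p < 1" using params by auto
  have al: "\<alpha> > 0" and be: "\<beta> > 0" using params by auto
  have stF: "standing_F F F'"
    and CC: "\<And>a w. weak_conv a w \<Longrightarrow> (\<lambda>n. F' (a n)) \<longlonglongrightarrow> F' w"
    and LB: "\<And>B. bounded B \<Longrightarrow> \<exists>M. lipschitz_on M B F'"
    using AI unfolding assumption_I_F_def by auto
  have der: "\<And>y. (F has_derivative blinfun_apply (F' y)) (at y)"
    using stF unfolding standing_F_def by blast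
  obtain l c0 where l: "bounded_linear l" "\<And>v. l v + c0 \<le> F v"
    using stF unfolding standing_F_def bounded_below_affine_def by blast
  obtain K0 where K0: "K0 > 0" "\<And>v. norm (l v) \<le> norm v * K0"
    using bounded_linear.pos_bounded[OF l(1)] by blast
  have Flow: "c0 - K0 * norm v \<le> F v" for v
    using l(2)[of v] K0(2)[of v] by (simp add: abs_le_iff mult.commute)
  have ep: "\<And>k. \<epsilon> k > 0" using eps(2) by blast
  have u0: "u 0 = u0"
    and algL: "\<And>k. L k \<in> Lset Lt \<gamma>"
    and algM: "\<And>k. is_minimizer (Qobj \<Omega> \<iota> F F' \<alpha> \<beta> p (\<epsilon> k) (u k) (L k)) (u (Suc k))"
    and algD: "\<And>k. Dcond F F' (u k) (L k) (u (Suc k))"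
    and algS: "\<And>k L' w. L' \<in> Lset Lt \<gamma> \<Longrightarrow> L' < L k \<Longrightarrow>
                 is_minimizer (Qobj \<Omega> \<iota> F F' \<alpha> \<beta> p (\<epsilon> k) (u k) L') w \<Longrightarrow> \<not> Dcond F F' (u k) L' w"
    using alg unfolding algorithmA_def by blast+
  have Lset_nn: "L' \<in> Lset Lt \<gamma> \<Longrightarrow> L' \<ge> 0" for L'
    unfolding Lset_def using Lt gam by auto
  have Lnn: "L k \<ge> 0" for k using Lset_nn[OF algL] .

  define J where "J k = S.Jf p (\<epsilon> k) F \<alpha> \<beta> (u k)" for k
  define d where "d k = u (Suc k) - u k" for k

  have desc: "J (Suc k) + \<alpha>/2 * (norm (d k))\<^sup>2 \<le> J k" for k
  proof -
    note e = ep[of k]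
    have e1: "Qobj \<Omega> \<iota> F F' \<alpha> \<beta> p (\<epsilon> k) (u k) (L k) (u k) =
      Qobj \<Omega> \<iota> F F' \<alpha> \<beta> p (\<epsilon> k) (u k) (L k) (u (Suc k)) + S.RQ p (\<epsilon> k) \<alpha> \<beta> (u k) (L k) (u k - u (Suc k))"
      by (rule S.Q_foc(2)[OF pp e algM])
    have e2: "Qobj \<Omega> \<iota> F F' \<alpha> \<beta> p (\<epsilon> k) (u k) (L k) (u k) = J k"
      unfolding J_def by (rule S.Q_center[OF pp e])
    have e3: "S.Jf p (\<epsilon> k) F \<alpha> \<beta> (u (Suc k)) \<le> Qobj \<Omega> \<iota> F F' \<alpha> \<beta> p (\<epsilon> k) (u k) (L k) (u (Suc k)) + L k / 2 * (norm (u (Suc k) - u k))\<^sup>2"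
      by (rule S.J_le_Q[OF pp e algD be])
    have e4: "S.RQ p (\<epsilon> k) \<alpha> \<beta> (u k) (L k) (u k - u (Suc k)) \<ge> (L k + \<alpha>)/2 * (norm (d k))\<^sup>2"
    proof -
      have "0 \<le> S.qf (S.wgt p (\<epsilon> k) (u k)) (u k - u (Suc k))" by (rule S.qf_nonneg[OF S.wgt_nn[OF pp e]])
      hence "0 \<le> \<beta> * S.qf (S.wgt p (\<epsilon> k) (u k)) (u k - u (Suc k))" using be by simp
      moreover have "norm (u k - u (Suc k)) = norm (d k)" unfolding d_def by (rule norm_minus_commute)
      ultimately show ?thesis unfolding S.RQ_def[OF pp e] by simp
    qed
    have e5: "J (Suc k) \<le> S.Jf p (\<epsilon> k) F \<alpha> \<beta> (u (Suc k))"
    proof -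
      have "(LINT x|S.M. psi p (\<epsilon> (Suc k)) ((\<iota> (u (Suc k)) x)\<^sup>2)) \<le> (LINT x|S.M. psi p (\<epsilon> k) ((\<iota> (u (Suc k)) x)\<^sup>2))"
      proof (rule integral_mono)
        show "integrable S.M (\<lambda>x. psi p (\<epsilon> (Suc k)) ((\<iota> (u (Suc k)) x)\<^sup>2))" by (rule S.psi_int[OF pp ep])
        show "integrable S.M (\<lambda>x. psi p (\<epsilon> k) ((\<iota> (u (Suc k)) x)\<^sup>2))" by (rule S.psi_int[OF pp ep])
        show "psi p (\<epsilon> (Suc k)) ((\<iota> (u (Suc k)) x)\<^sup>2) \<le> psi p (\<epsilon> k) ((\<iota> (u (Suc k)) x)\<^sup>2)" for x
          using eps(1) ep pp by (intro psi_mono_eps) (auto simp: decseq_Suc_iff)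
      qed
      hence "\<beta> * (LINT x|S.M. psi p (\<epsilon> (Suc k)) ((\<iota> (u (Suc k)) x)\<^sup>2)) \<le> \<beta> * (LINT x|S.M. psi p (\<epsilon> k) ((\<iota> (u (Suc k)) x)\<^sup>2))"
        using be by (intro mult_left_mono) auto
      thus ?thesis unfolding J_def S.Jf_def[OF pp ep] by simp
    qed
    have "norm (u (Suc k) - u k) = norm (d k)" unfolding d_def ..
    thus ?thesis using e1 e2 e3 e4 e5 by (simp add: algebra_simps)
  qed

  have Jsum: "J k + \<alpha>/2 * (\<Sum>i<k. (norm (d i))\<^sup>2) \<le> J 0" for k
  proof (induction k)
    case 0 thus ?case by simp
  next
    case (Suc k)
    have "J (Suc k) + \<alpha>/2 * (\<Sum>i<Suc k. (norm (d i))\<^sup>2) = (J (Suc k) + \<alpha>/2 * (norm (d k))\<^sup>2) + \<alpha>/2 * (\<Sum>i<k. (norm (d i))\<^sup>2)"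
      by (simp add: algebra_simps)
    also have "\<dots> \<le> J k + \<alpha>/2 * (\<Sum>i<k. (norm (d i))\<^sup>2)" using desc[of k] by linarith
    finally show ?case using Suc.IH by linarith
  qed
  have sum_nn: "0 \<le> \<alpha>/2 * (\<Sum>i<k. (norm (d i))\<^sup>2)" for k using al by (intro mult_nonneg_nonneg sum_nonneg) auto
  have Jlow: "c0 - K0 * norm v + \<alpha>/2 * (norm v)\<^sup>2 \<le> S.Jf p e F \<alpha> \<beta> v" if e: "e > 0" for e v
  proof -
    have "0 \<le> (LINT x|S.M. psi p e ((\<iota> v x)\<^sup>2))"
      by (rule integral_nonneg_AE) (use psi_nonneg[OF e _ pp] in auto)
    hence "0 \<le> \<beta> * (LINT x|S.M. psi p e ((\<iota> v x)\<^sup>2))" using be by simp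
    thus ?thesis unfolding S.Jf_def[OF pp e] using Flow[of v] by linarith
  qed
  define mlow where "mlow = c0 - K0\<^sup>2 / (2 * \<alpha>)"
  have mlow: "mlow \<le> c0 - K0 * s + \<alpha>/2 * s\<^sup>2" for s
  proof -
    have "0 \<le> (\<alpha> * s - K0)\<^sup>2" by simp
    hence "2 * \<alpha> * (K0 * s - \<alpha>/2 * s\<^sup>2) \<le> K0\<^sup>2" by (simp add: power2_eq_square algebra_simps)
    hence "K0 * s - \<alpha>/2 * s\<^sup>2 \<le> K0\<^sup>2 / (2 * \<alpha>)" using al by (simp add: field_simps)
    thus ?thesis unfolding mlow_def by linarith
  qed
  define R0 where "R0 = 1 + 2 * \<bar>K0\<bar> / (\<alpha>/2) + 2 * \<bar>J 0 - c0\<bar> / (\<alpha>/2)"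
  have ubd: "norm (u k) \<le> R0" for k
  proof -
    have "c0 - K0 * norm (u k) + \<alpha>/2 * (norm (u k))\<^sup>2 \<le> J k" unfolding J_def by (rule Jlow[OF ep])
    hence "\<alpha>/2 * (norm (u k))\<^sup>2 - K0 * norm (u k) \<le> J 0 - c0" using Jsum[of k] sum_nn[of k] by linarith
    thus ?thesis unfolding R0_def by (intro quad_bound) (use al in auto)
  qed
  have R0nn: "R0 \<ge> 0" using ubd[of 0] norm_ge_zero order_trans by blast
  have sumd: "(\<Sum>i<k. (norm (d i))\<^sup>2) \<le> 2 / \<alpha> * (J 0 - mlow)" for k
  proof -
    have "mlow \<le> J k" using mlow[of "norm (u k)"] Jlow[OF ep[of k], of "u k"] unfolding J_def by linarith
    hence "\<alpha>/2 * (\<Sum>i<k. (norm (d i))\<^sup>2) \<le> J 0 - mlow" using Jsum[of k] by linarith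
    thus ?thesis using al by (simp add: field_simps)
  qed
  have "summable (\<lambda>i. (norm (d i))\<^sup>2)" by (rule summableI_nonneg_bounded[OF _ sumd]) simp
  hence "(\<lambda>i. (norm (d i))\<^sup>2) \<longlonglongrightarrow> 0" by (rule summable_LIMSEQ_zero)
  hence "(\<lambda>i. sqrt ((norm (d i))\<^sup>2)) \<longlonglongrightarrow> sqrt 0" by (rule tendsto_real_sqrt)
  hence dlim: "(\<lambda>i. norm (d i)) \<longlonglongrightarrow> 0" by simp

  obtain M0 where lip0: "lipschitz_on M0 (cball 0 R0) F'" using LB[of "cball 0 R0"] by auto
  have M0: "M0 \<ge> 0" using lip0 unfolding lipschitz_on_def by blast
  define Kd where "Kd = norm (F' 0) + M0 * R0"
  have F'bd: "norm (F' v) \<le> Kd" if "norm v \<le> R0" for v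
  proof -
    have v: "v \<in> cball 0 R0" using that by simp
    have z: "0 \<in> cball 0 R0" using R0nn by simp
    have "dist (F' v) (F' 0) \<le> M0 * dist v 0" using lip0 v z unfolding lipschitz_on_def by blast
    hence "norm (F' v - F' 0) \<le> M0 * norm v" by (simp add: dist_norm)
    also have "\<dots> \<le> M0 * R0" using M0 that by (intro mult_left_mono)
    finally have "norm (F' v - F' 0) \<le> M0 * R0" .
    moreover have "norm (F' v) \<le> norm (F' 0) + norm (F' v - F' 0)" by (metis norm_triangle_sub add.commute)
    ultimately show ?thesis unfolding Kd_def by linarith
  qed
  define C1 where "C1 = J 0 - c0 + K0 * R0 + Kd * R0"
  define R1 where "R1 = 1 + 2 * \<bar>Kd\<bar> / (\<alpha>/2) + 2 * \<bar>C1\<bar> / (\<alpha>/2)"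
  have wbd: "norm w \<le> R1" if L'nn: "L' \<ge> 0" and wm: "is_minimizer (Qobj \<Omega> \<iota> F F' \<alpha> \<beta> p (\<epsilon> k) (u k) L') w" for k L' w
  proof -
    have "F (u k) + F' (u k) (w - u k) + \<alpha> / 2 * (norm w)\<^sup>2 \<le> Qobj \<Omega> \<iota> F F' \<alpha> \<beta> p (\<epsilon> k) (u k) L' w"
      by (rule S.Q_lower[OF pp ep L'nn be])
    also have "\<dots> \<le> Qobj \<Omega> \<iota> F F' \<alpha> \<beta> p (\<epsilon> k) (u k) L' (u k)" using wm unfolding is_minimizer_def by blast
    also have "\<dots> = J k" unfolding J_def by (rule S.Q_center[OF pp ep])
    also have "\<dots> \<le> J 0" using Jsum[of k] sum_nn[of k] by linarith
    finally have A: "F (u k) + F' (u k) (w - u k) + \<alpha> / 2 * (norm w)\<^sup>2 \<le> J 0" .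
    have B: "c0 - K0 * R0 \<le> F (u k)"
      using Flow[of "u k"] ubd[of k] K0(1) by (smt (verit) mult_left_mono)
    have "\<bar>F' (u k) (w - u k)\<bar> \<le> norm (F' (u k)) * norm (w - u k)" using norm_blinfun[of "F' (u k)" "w - u k"] by simp
    also have "\<dots> \<le> Kd * (norm w + R0)"
    proof (rule mult_mono)
      show "norm (F' (u k)) \<le> Kd" by (rule F'bd[OF ubd])
      show "norm (w - u k) \<le> norm w + R0" using norm_triangle_ineq4[of w "u k"] ubd[of k] by linarith
      show "0 \<le> Kd" using F'bd[OF ubd[of 0]] norm_ge_zero order_trans by blast
    qed simp
    finally have C: "- (Kd * (norm w + R0)) \<le> F' (u k) (w - u k)" by linarith
    have "\<alpha>/2 * (norm w)\<^sup>2 - Kd * norm w \<le> C1" using A B C unfolding C1_def by (simp add: algebra_simps)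
    thus ?thesis unfolding R1_def by (intro quad_bound) (use al in auto)
  qed
  define R2 where "R2 = max R0 R1"
  obtain M1 where lip1: "lipschitz_on M1 (cball 0 R2) F'" using LB[of "cball 0 R2"] by auto
  have M1: "M1 \<ge> 0" using lip1 unfolding lipschitz_on_def by blast
  have Dc_ok: "Dcond F F' (u k) L' w" if "M1 \<le> L'" "norm w \<le> R2" for k L' w
  proof -
    have "F w \<le> F (u k) + F' (u k) (w - u k) + M1 * (norm (w - u k))\<^sup>2"
      by (rule taylor_bound[OF der lip1 convex_cball]) (use ubd[of k] that in \<open>auto simp: R2_def\<close>)
    also have "M1 * (norm (w - u k))\<^sup>2 \<le> L' * (norm (w - u k))\<^sup>2" using that by (intro mult_right_mono) auto
    finally show ?thesis unfolding Dcond_def by simp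
  qed
  define Lmax where "Lmax = \<gamma> * max Lt M1"
  have Lbd: "L k \<le> Lmax" for k
  proof (rule ccontr)
    assume H: "\<not> L k \<le> Lmax"
    have mx: "max Lt M1 > 0" using Lt by (simp add: less_max_iff_disj)
    have Lm0: "Lmax > 0" unfolding Lmax_def using gam mx by simp
    obtain j where j: "L k = Lt * \<gamma> ^ j"
      using algL[of k] H Lm0 unfolding Lset_def by auto
    have "j \<noteq> 0"
    proof
      assume "j = 0"
      hence "L k = Lt" using j by simp
      also have "Lt \<le> max Lt M1" by simp
      also have "\<dots> = 1 * max Lt M1" by simp
      also have "\<dots> \<le> \<gamma> * max Lt M1" using gam mx by (intro mult_right_mono) auto
      finally show False using H unfolding Lmax_def by simp
    qed
    then obtain i where i: "j = Suc i" by (cases j) auto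
    define L' where "L' = Lt * \<gamma> ^ i"
    have L'pos: "L' > 0" unfolding L'_def using Lt gam by simp
    have Lk: "L k = \<gamma> * L'" unfolding j i L'_def by simp
    have L'set: "L' \<in> Lset Lt \<gamma>" unfolding Lset_def L'_def by auto
    have L'lt: "L' < L k" unfolding Lk using L'pos gam by simp
    have "\<gamma> * max Lt M1 < \<gamma> * L'" using H Lk unfolding Lmax_def by simp
    hence "max Lt M1 < L'" using gam by simp
    hence L'M1: "M1 \<le> L'" by simp
    obtain w where wm: "is_minimizer (Qobj \<Omega> \<iota> F F' \<alpha> \<beta> p (\<epsilon> k) (u k) L') w"
      using S.Q_min_exists[OF pp ep[of k], of L' \<alpha> \<beta> F F' "u k"] L'pos al be by auto
    have "norm w \<le> R2" using wbd[OF _ wm] L'pos unfolding R2_def by fastforce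
    hence "Dcond F F' (u k) L' w" by (rule Dc_ok[OF L'M1])
    thus False using algS[OF L'set L'lt wm] by blast
  qed

  define a where "a n = u (r n)" for n
  define b where "b n = u (Suc (r n))" for n
  have wa: "weak_conv a ubar" using sub(2) unfolding a_def by (simp add: o_def)
  have dr: "(\<lambda>n. norm (d (r n))) \<longlonglongrightarrow> 0" using LIMSEQ_subseq_LIMSEQ[OF dlim sub(1)] by (simp add: o_def)
  have wb: "weak_conv b ubar"
    unfolding weak_conv_def
  proof
    fix z
    have bz: "inner (b n) z = inner (a n) z + inner (d (r n)) z" for n
      unfolding a_def b_def d_def by (simp add: inner_diff_left)
    have "(\<lambda>n. inner (d (r n)) z) \<longlonglongrightarrow> 0"
    proof (rule Lim_null_comparison[rotated])
      show "(\<lambda>n. norm (d (r n)) * norm z) \<longlonglongrightarrow> 0" using tendsto_mult[OF dr tendsto_const, of "norm z"] by simp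
      show "\<forall>\<^sub>F n in sequentially. norm (inner (d (r n)) z) \<le> norm (d (r n)) * norm z"
        by (intro always_eventually allI) (simp add: Cauchy_Schwarz_ineq2)
    qed
    moreover have "(\<lambda>n. inner (a n) z) \<longlonglongrightarrow> inner ubar z" using wa unfolding weak_conv_def by blast
    ultimately have "(\<lambda>n. inner (a n) z + inner (d (r n)) z) \<longlonglongrightarrow> inner ubar z + 0" by (intro tendsto_add)
    thus "(\<lambda>n. inner (b n) z) \<longlonglongrightarrow> inner ubar z" unfolding bz by simp
  qed
  have ba: "bounded (range a)" unfolding bounded_iff a_def using ubd by blast
  have bb: "bounded (range b)" unfolding bounded_iff b_def using ubd by blast
  obtain \<sigma> where \<sigma>: "strict_mono \<sigma>" "AE x in S.M. (\<lambda>n. \<iota> (a (\<sigma> n)) x) \<longlonglongrightarrow> \<iota> ubar x"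
      "AE x in S.M. (\<lambda>n. \<iota> (b (\<sigma> n)) x) \<longlonglongrightarrow> \<iota> ubar x"
    using S.double_AE[OF wa wb ba bb] by blast
  define kn where "kn n = r (\<sigma> n)" for n
  have knm: "strict_mono kn" unfolding kn_def using sub(1) \<sigma>(1) by (simp add: strict_mono_def)
  have wk: "weak_conv (\<lambda>n. u (kn n)) ubar" using weak_sub[OF wa \<sigma>(1)] unfolding a_def kn_def by (simp add: o_def)
  have wk1: "weak_conv (\<lambda>n. u (Suc (kn n))) ubar" using weak_sub[OF wb \<sigma>(1)] unfolding b_def kn_def by (simp add: o_def)
  have aeA: "AE x in S.M. (\<lambda>n. \<iota> (u (kn n)) x) \<longlonglongrightarrow> \<iota> ubar x" using \<sigma>(2) unfolding a_def kn_def .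
  have aeB: "AE x in S.M. (\<lambda>n. \<iota> (u (Suc (kn n))) x) \<longlonglongrightarrow> \<iota> ubar x" using \<sigma>(3) unfolding b_def kn_def .
  have ek: "(\<lambda>n. \<epsilon> (kn n)) \<longlonglongrightarrow> 0" using LIMSEQ_subseq_LIMSEQ[OF eps(3) knm] by (simp add: o_def)

  define h where "h n x = 2 * \<beta> * (S.wgt p (\<epsilon> (kn n)) (u (kn n)) x * (\<iota> (u (Suc (kn n))) x * \<iota> (u (Suc (kn n))) x))" for n x
  define g where "g x = \<beta> * p * \<bar>\<iota> ubar x\<bar> powr p" for x
  have hm: "h n \<in> borel_measurable S.M" for n unfolding h_def by measurable
  have hi: "integrable S.M (h n)" for n
    unfolding h_def using S.wgt_Bf_int[OF pp ep] by simp
  have hnn: "0 \<le> h n x" for n x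
    unfolding h_def using S.wgt_nn[OF pp ep] be by simp
  have gnn: "0 \<le> g x" for x unfolding g_def using be pp by simp
  have gi: "integrable S.M g"
  proof (rule Bochner_Integration.integrable_bound)
    show "integrable S.M (\<lambda>x. \<beta> * p * (1 + (\<iota> ubar x)\<^sup>2))"
      by (intro integrable_mult_right Bochner_Integration.integrable_add S.int_const S.iota_sq)
    show "g \<in> borel_measurable S.M" unfolding g_def by measurable
    show "AE x in S.M. norm (g x) \<le> norm (\<beta> * p * (1 + (\<iota> ubar x)\<^sup>2))"
    proof (intro AE_I2)
      fix x
      have "\<bar>\<iota> ubar x\<bar> powr p = ((\<iota> ubar x)\<^sup>2) powr (p/2)"
      proof (cases "\<iota> ubar x = 0")
        case True thus ?thesis by simp
      next
        case False
        hence sq: "((\<iota> ubar x)\<^sup>2) = \<bar>\<iota> ubar x\<bar> powr 2" by (simp add: powr_numeral)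
        show ?thesis unfolding sq powr_powr by simp
      qed
      also have "\<dots> \<le> 1 + (\<iota> ubar x)\<^sup>2" using pp by (intro powr_le_1_plus) auto
      finally have "g x \<le> \<beta> * p * (1 + (\<iota> ubar x)\<^sup>2)" unfolding g_def using be pp by simp
      thus "norm (g x) \<le> norm (\<beta> * p * (1 + (\<iota> ubar x)\<^sup>2))" using gnn[of x] be pp by simp
    qed
  qed
  have ae: "AE x in S.M. ennreal (g x) \<le> liminf (\<lambda>n. ennreal (h n x))"
    using aeA aeB
  proof eventually_elim
    case (elim x)
    show ?case
    proof (cases "\<iota> ubar x = 0")
      case True thus ?thesis unfolding g_def using pp by simp
    next
      case False
      have "(\<lambda>n. 2 * \<beta> * (dpsi p (\<epsilon> (kn n)) ((\<iota> (u (kn n)) x)\<^sup>2) * (\<iota> (u (Suc (kn n))) x * \<iota> (u (Suc (kn n))) x)))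
           \<longlonglongrightarrow> \<beta> * p * \<bar>\<iota> ubar x\<bar> powr p"
        by (rule pw_lim[OF elim(1) elim(2) ek False])
      hence "(\<lambda>n. h n x) \<longlonglongrightarrow> g x" unfolding h_def g_def S.wgt_def .
      thus ?thesis using lim_liminf_ennreal by simp
    qed
  qed
  define T where "T = - F' ubar ubar - \<alpha> * (norm ubar)\<^sup>2"
  define U where "U n = - F' (u (kn n)) (u (Suc (kn n))) - L (kn n) * inner (u (Suc (kn n)) - u (kn n)) (u (Suc (kn n)))
      - \<alpha> * (2 * inner (u (Suc (kn n))) ubar - (norm ubar)\<^sup>2)" for n
  have hU: "(LINT x|S.M. h n x) \<le> U n" for n
  proof -
    let ?k = "kn n" let ?w = "u (Suc (kn n))"
    have foc: "S.DQ p (\<epsilon> ?k) F' \<alpha> \<beta> (u ?k) (L ?k) ?w ?w = 0"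
      by (rule S.Q_foc(1)[OF pp ep algM])
    have "(LINT x|S.M. h n x) = 2 * \<beta> * S.Bf (S.wgt p (\<epsilon> ?k) (u ?k)) ?w ?w"
      unfolding h_def S.Bf_def by simp
    also have "\<dots> = - F' (u ?k) ?w - L ?k * inner (?w - u ?k) ?w - \<alpha> * inner ?w ?w"
      using foc unfolding S.DQ_def[OF pp ep] by linarith
    also have "\<alpha> * inner ?w ?w \<ge> \<alpha> * (2 * inner ?w ubar - (norm ubar)\<^sup>2)"
    proof -
      have "0 \<le> inner (?w - ubar) (?w - ubar)" by simp
      hence "2 * inner ?w ubar - (norm ubar)\<^sup>2 \<le> inner ?w ?w"
        by (simp add: inner_diff_left inner_diff_right inner_commute power2_norm_eq_inner)
      thus ?thesis using al by (intro mult_left_mono) auto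
    qed
    hence "- F' (u ?k) ?w - L ?k * inner (?w - u ?k) ?w - \<alpha> * inner ?w ?w \<le> U n" unfolding U_def by linarith
    finally show ?thesis .
  qed
  have Ulim: "U \<longlonglongrightarrow> T"
  proof -
    have t1: "(\<lambda>n. F' (u (kn n)) (u (Suc (kn n)))) \<longlonglongrightarrow> F' ubar ubar"
    proof -
      have c1: "(\<lambda>n. F' (u (kn n))) \<longlonglongrightarrow> F' ubar" by (rule CC[OF wk])
      have c2: "(\<lambda>n. F' ubar (u (Suc (kn n)))) \<longlonglongrightarrow> F' ubar ubar" by (rule blinfun_weak[OF wk1])
      have "(\<lambda>n. (F' (u (kn n)) - F' ubar) (u (Suc (kn n)))) \<longlonglongrightarrow> 0"
      proof (rule Lim_null_comparison[rotated])
        have "(\<lambda>n. norm (F' (u (kn n)) - F' ubar)) \<longlonglongrightarrow> 0"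
          using c1 by (simp add: LIM_zero_iff tendsto_norm_zero)
        thus "(\<lambda>n. norm (F' (u (kn n)) - F' ubar) * R0) \<longlonglongrightarrow> 0" by (intro tendsto_mult_left_zero)
        show "\<forall>\<^sub>F n in sequentially. norm ((F' (u (kn n)) - F' ubar) (u (Suc (kn n)))) \<le> norm (F' (u (kn n)) - F' ubar) * R0"
        proof (intro always_eventually allI)
          fix n
          have "norm ((F' (u (kn n)) - F' ubar) (u (Suc (kn n)))) \<le> norm (F' (u (kn n)) - F' ubar) * norm (u (Suc (kn n)))"
            by (rule norm_blinfun)
          also have "\<dots> \<le> norm (F' (u (kn n)) - F' ubar) * R0" by (intro mult_left_mono ubd) simp
          finally show "norm ((F' (u (kn n)) - F' ubar) (u (Suc (kn n)))) \<le> norm (F' (u (kn n)) - F' ubar) * R0" .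
        qed
      qed
      hence "(\<lambda>n. (F' (u (kn n)) - F' ubar) (u (Suc (kn n))) + F' ubar (u (Suc (kn n)))) \<longlonglongrightarrow> 0 + F' ubar ubar"
        using c2 by (intro tendsto_add)
      thus ?thesis by (simp add: blinfun.diff_left)
    qed
    have t2: "(\<lambda>n. L (kn n) * inner (u (Suc (kn n)) - u (kn n)) (u (Suc (kn n)))) \<longlonglongrightarrow> 0"
    proof (rule Lim_null_comparison[rotated])
      have "(\<lambda>n. norm (d (kn n))) \<longlonglongrightarrow> 0" using LIMSEQ_subseq_LIMSEQ[OF dlim knm] by (simp add: o_def)
      thus "(\<lambda>n. Lmax * (norm (d (kn n)) * R0)) \<longlonglongrightarrow> 0" by (intro tendsto_mult_right_zero tendsto_mult_left_zero)
      show "\<forall>\<^sub>F n in sequentially. norm (L (kn n) * inner (u (Suc (kn n)) - u (kn n)) (u (Suc (kn n)))) \<le> Lmax * (norm (d (kn n)) * R0)"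
      proof (intro always_eventually allI)
        fix n
        have "\<bar>inner (u (Suc (kn n)) - u (kn n)) (u (Suc (kn n)))\<bar> \<le> norm (d (kn n)) * norm (u (Suc (kn n)))"
          unfolding d_def by (rule Cauchy_Schwarz_ineq2)
        also have "\<dots> \<le> norm (d (kn n)) * R0" by (intro mult_left_mono ubd) simp
        finally have i: "\<bar>inner (u (Suc (kn n)) - u (kn n)) (u (Suc (kn n)))\<bar> \<le> norm (d (kn n)) * R0" .
        have "\<bar>L (kn n)\<bar> * \<bar>inner (u (Suc (kn n)) - u (kn n)) (u (Suc (kn n)))\<bar> \<le> Lmax * (norm (d (kn n)) * R0)"
          using Lnn[of "kn n"] Lbd[of "kn n"] i by (intro mult_mono) auto
        thus "norm (L (kn n) * inner (u (Suc (kn n)) - u (kn n)) (u (Suc (kn n)))) \<le> Lmax * (norm (d (kn n)) * R0)"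
          by (simp add: abs_mult)
      qed
    qed
    have t3: "(\<lambda>n. inner (u (Suc (kn n))) ubar) \<longlonglongrightarrow> inner ubar ubar" using wk1 unfolding weak_conv_def by blast
    have "U \<longlonglongrightarrow> - F' ubar ubar - 0 - \<alpha> * (2 * inner ubar ubar - (norm ubar)\<^sup>2)"
      unfolding U_def by (intro tendsto_intros t1 t2 t3)
    thus ?thesis unfolding T_def by (simp add: power2_norm_eq_inner)
  qed
  have main: "(LINT x|S.M. g x) \<le> T" by (rule fatou_bound[OF hm hi hnn gi gnn ae hU Ulim])
  hence main': "\<beta> * (p * (LINT x|S.M. \<bar>\<iota> ubar x\<bar> powr p)) \<le> T" unfolding g_def by simp
  define lam where "lam = (- (1/\<beta>)) *\<^sub>R (F' ubar + \<alpha> *\<^sub>R blinfun_inner_left ubar)"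
  have lamv: "lam v = - (F' ubar v + \<alpha> * inner ubar v) / \<beta>" for v
    unfolding lam_def using be by (simp add: blinfun.bilinear_simps inner_commute field_simps)
  show ?thesis
  proof (intro exI conjI allI)
    show "\<alpha> * inner ubar v + \<beta> * lam v = - F' ubar v" for v unfolding lamv using be by simp
    have "lam ubar = T / \<beta>" unfolding lamv T_def by (simp add: power2_norm_eq_inner)
    hence "\<beta> * lam ubar = T" using be by simp
    hence "\<beta> * (p * (LINT x|S.M. \<bar>\<iota> ubar x\<bar> powr p)) \<le> \<beta> * lam ubar" using main' by simp
    thus "lam ubar \<ge> p * (LINT x|lebesgue_on \<Omega>. \<bar>\<iota> ubar x\<bar> powr p)"
      by (rule mult_left_le_imp_le) (use be in simp)
  qed
qed

end
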